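(* For $n\ge2$, \[R_n(x)=2(1+x)^{n-1}D_n\!\Big(\frac{x}{1+x}\Big)=2\sum_{i=0}^{\lfloor (n-1)/2\rfloor} d_{n,i}\,x^{i+1}(1+x)^{\,n-2-i},\] where $R_n(x)=\sum_{\pi\in\mathfrak S_n}x^{\mathrm{run}(\pi)}$ and $D_n(x)=\sum_{i=0}^{\lfloor (n-1)/2\rfloor}d_{n,i}x^{i+1}$.
   Context: For $\pi\in\mathfrak S_n$, $\mathrm{run}(\pi)$ is $1$ plus the number of $i\in\{2,\dots,n-1\}$ with $\pi_{i-1}<\pi_i>\pi_{i+1}$ or $\pi_{i-1}>\pi_i<\pi_{i+1}$. A descent of $\pi$ is an index $i\in[n-1]$ with $\pi_i>\pi_{i+1}$. For an index $i$, the $\pi_i$-factorization is $\pi=w_1w_2\pi_iw_4w_5$ where $w_2$ is the longest factor ending at position $i-1$ with all letters $>\pi_i$ and $w_4$ is the longest factor starting at position $i+1$ with all letters $>\pi_i$. $\pi\in\mathfrak S_n$ is an André permutation if (i) there is no $i\in\{2,\dots,n-1\}$ with $\pi_{i-1}>\pi_i>\pi_{i+1}$, (ii) $\pi_{n-1}<\pi_n$, and (iii) for every $i\in\{2,\dots,n-1\}$ with $\pi_{i-1}>\pi_i<\pi_{i+1}$, the maximum letter of $w_2$ is smaller than the maximum letter of $w_4$ in the $\pi_i$-factorization. $d_{n,i}$ is the number of André permutations in $\mathfrak S_n$ with exactly $i$ descents. *)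

theory Defs
  imports Complex_Main "HOL-Combinatorics.Multiset_Permutations"
begin

text \<open>Permutations of [n] are represented as lists (one-line notation) of the
  numbers 1..n. Positions are 1-indexed: the i-th letter is p ! (i - 1).\<close>

definition perms :: "nat \<Rightarrow> nat list set" where
  "perms n = permutations_of_set {1..n}"

definition letter :: "nat list \<Rightarrow> nat \<Rightarrow> nat" where
  "letter p i = p ! (i - 1)"

definition run :: "nat list \<Rightarrow> nat" where
  "run p = 1 + card {i \<in> {2..length p - 1}.
      (letter p (i-1) < letter p i \<and> letter p i > letter p (i+1)) \<or>
      (letter p (i-1) > letter p i \<and> letter p i < letter p (i+1))}"

definition des :: "nat list \<Rightarrow> nat" where
  "des p = card {i \<in> {1..length p - 1}. letter p i > letter p (i+1)}"

text \<open>Letters of w2 (longest factor ending at position i-1 with all letters > p_i)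
  and of w4 (longest factor starting at position i+1 with all letters > p_i).\<close>

definition w2_letters :: "nat list \<Rightarrow> nat \<Rightarrow> nat set" where
  "w2_letters p i = {letter p j | j. 1 \<le> j \<and> j < i \<and>
      (\<forall>k. j \<le> k \<and> k < i \<longrightarrow> letter p k > letter p i)}"

definition w4_letters :: "nat list \<Rightarrow> nat \<Rightarrow> nat set" where
  "w4_letters p i = {letter p j | j. i < j \<and> j \<le> length p \<and>
      (\<forall>k. i < k \<and> k \<le> j \<longrightarrow> letter p k > letter p i)}"

definition andre :: "nat list \<Rightarrow> bool" where
  "andre p \<longleftrightarrow>
     (\<not> (\<exists>i \<in> {2..length p - 1}. letter p (i-1) > letter p i \<and> letter p i > letter p (i+1))) \<and>
     letter p (length p - 1) < letter p (length p) \<and>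
     (\<forall>i \<in> {2..length p - 1}. letter p (i-1) > letter p i \<and> letter p i < letter p (i+1) \<longrightarrow>
        Max (w2_letters p i) < Max (w4_letters p i))"

definition d :: "nat \<Rightarrow> nat \<Rightarrow> nat" where
  "d n i = card {p \<in> perms n. andre p \<and> des p = i}"

definition R :: "nat \<Rightarrow> real \<Rightarrow> real" where
  "R n x = (\<Sum>p\<in>perms n. x ^ run p)"

definition D :: "nat \<Rightarrow> real \<Rightarrow> real" where
  "D n x = (\<Sum>i = 0..(n - 1) div 2. real (d n i) * x ^ (i + 1))"

end

theory Submission
  imports Defs "HOL-Computational_Algebra.Polynomial"
begin

lemma letter_Cons_Suc: "i \<ge> 1 \<Longrightarrow> letter (a # q) (Suc i) = letter q i"
  by (simp add: letter_def)

definition cnt3 :: "(nat \<Rightarrow> nat \<Rightarrow> nat \<Rightarrow> bool) \<Rightarrow> nat list \<Rightarrow> nat" where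
  "cnt3 P p = card {i \<in> {2..length p - 1}. P (letter p (i-1)) (letter p i) (letter p (i+1))}"

definition cnt2 :: "(nat \<Rightarrow> nat \<Rightarrow> bool) \<Rightarrow> nat list \<Rightarrow> nat" where
  "cnt2 P p = card {i \<in> {1..length p - 1}. P (letter p i) (letter p (i+1))}"

lemma cnt3_short: "length p \<le> 2 \<Longrightarrow> cnt3 P p = 0"
  unfolding cnt3_def by (auto intro!: card_eq_0_iff[THEN iffD2])

lemma cnt2_short: "length p \<le> 1 \<Longrightarrow> cnt2 P p = 0"
  unfolding cnt2_def by (auto intro!: card_eq_0_iff[THEN iffD2])

lemma cnt3_cons: "cnt3 P (a # b # c # r) = (if P a b c then 1 else 0) + cnt3 P (b # c # r)"
proof -
  let ?S = "{i \<in> {2..length (b # c # r) - 1}. P (letter (b # c # r) (i-1)) (letter (b # c # r) i) (letter (b # c # r) (i+1))}"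
  let ?T = "{i \<in> {2..length (a # b # c # r) - 1}. P (letter (a # b # c # r) (i-1)) (letter (a # b # c # r) i) (letter (a # b # c # r) (i+1))}"
  have eq: "?T = (if P a b c then {2} else {}) \<union> Suc ` ?S"
  proof (rule set_eqI, rule iffI)
    fix i assume "i \<in> ?T"
    then show "i \<in> (if P a b c then {2} else {}) \<union> Suc ` ?S"
    proof (cases "i = 2")
      case True with \<open>i \<in> ?T\<close> show ?thesis by (simp add: letter_def)
    next
      case False
      with \<open>i \<in> ?T\<close> obtain k where k: "i = Suc k" "k \<ge> 2" by (cases i) auto
      with \<open>i \<in> ?T\<close> have "k \<in> ?S"
        by (auto simp: letter_def nth_Cons split: nat.splits)
      with k show ?thesis by auto
    qed
  next
    fix i assume "i \<in> (if P a b c then {2} else {}) \<union> Suc ` ?S"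
    then consider "P a b c" "i = 2" | k where "i = Suc k" "k \<in> ?S" by (auto split: if_splits)
    then show "i \<in> ?T"
    proof cases
      case 1 then show ?thesis by (simp add: letter_def)
    next
      case 2
      then have "k \<ge> 2" by simp
      then obtain k' where "k = Suc (Suc k')" by (metis add_2_eq_Suc le_Suc_ex)
      with 2 show ?thesis by (simp add: letter_def)
    qed
  qed
  have fin: "finite ?S" by simp
  have "2 \<notin> Suc ` ?S" by auto
  then have "card ?T = (if P a b c then 1 else 0) + card (Suc ` ?S)"
    unfolding eq by (auto simp: card_insert_if)
  also have "card (Suc ` ?S) = card ?S" by (simp add: card_image)
  finally show ?thesis unfolding cnt3_def .
qed

lemma cnt2_cons: "cnt2 P (a # b # r) = (if P a b then 1 else 0) + cnt2 P (b # r)"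
proof -
  let ?S = "{i \<in> {1..length (b # r) - 1}. P (letter (b # r) i) (letter (b # r) (i+1))}"
  let ?T = "{i \<in> {1..length (a # b # r) - 1}. P (letter (a # b # r) i) (letter (a # b # r) (i+1))}"
  have eq: "?T = (if P a b then {1} else {}) \<union> Suc ` ?S"
  proof (rule set_eqI, rule iffI)
    fix i assume "i \<in> ?T"
    then show "i \<in> (if P a b then {1} else {}) \<union> Suc ` ?S"
    proof (cases "i = 1")
      case True with \<open>i \<in> ?T\<close> show ?thesis by (simp add: letter_def)
    next
      case False
      with \<open>i \<in> ?T\<close> obtain k where k: "i = Suc k" "k \<ge> 1" by (cases i) auto
      with \<open>i \<in> ?T\<close> have "k \<in> ?S"
        by (auto simp: letter_def nth_Cons split: nat.splits)
      with k show ?thesis by auto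
    qed
  next
    fix i assume "i \<in> (if P a b then {1} else {}) \<union> Suc ` ?S"
    then consider "P a b" "i = 1" | k where "i = Suc k" "k \<in> ?S" by (auto split: if_splits)
    then show "i \<in> ?T"
    proof cases
      case 1 then show ?thesis by (simp add: letter_def)
    next
      case 2
      then have "k \<ge> 1" by simp
      then obtain k' where "k = Suc k'" by (metis Suc_le_D One_nat_def)
      with 2 show ?thesis by (simp add: letter_def)
    qed
  qed
  have "1 \<notin> Suc ` ?S" by auto
  then have "card ?T = (if P a b then 1 else 0) + card (Suc ` ?S)"
    unfolding eq by (auto simp: card_insert_if)
  also have "card (Suc ` ?S) = card ?S" by (simp add: card_image)
  finally show ?thesis unfolding cnt2_def .
qed

definition tpP :: "nat \<Rightarrow> nat \<Rightarrow> nat \<Rightarrow> bool" where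
  "tpP a b c \<longleftrightarrow> (a < b \<and> b > c) \<or> (a > b \<and> b < c)"

lemma run_cnt3: "run p = 1 + cnt3 tpP p"
  unfolding run_def cnt3_def tpP_def by simp

lemma des_cnt2: "des p = cnt2 (\<lambda>a b. a > b) p"
  unfolding des_def cnt2_def by simp

definition ins :: "nat \<Rightarrow> nat \<Rightarrow> nat list \<Rightarrow> nat list" where
  "ins j M p = take j p @ M # drop j p"

lemma ins_0[simp]: "ins 0 M p = M # p" by (simp add: ins_def)
lemma ins_Suc_Cons[simp]: "ins (Suc j) M (a # p) = a # ins j M p" by (simp add: ins_def)

definition T where "T p = cnt3 tpP p"

lemma T_Nil[simp]: "T [] = 0" and T_one[simp]: "T [a] = 0" and T_two[simp]: "T [a,b] = 0"
  by (auto simp: T_def intro: cnt3_short)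

lemma T_cons3[simp]: "T (a # b # c # r) = (if tpP a b c then 1 else 0) + T (b # c # r)"
  unfolding T_def by (rule cnt3_cons)

definition F :: "real \<Rightarrow> nat \<Rightarrow> nat list \<Rightarrow> real" where
  "F x M p = (\<Sum>j = 0..length p. x ^ T (ins j M p))"

lemma F_step:
  "F x M (a # b # c # r) = x ^ T (M # a # b # c # r) + x ^ T (a # M # b # c # r) + x ^ T (a # b # M # c # r)
     + x ^ (if tpP a b c then 1 else 0) * (F x M (b # c # r) - x ^ T (M # b # c # r) - x ^ T (b # M # c # r))"
proof -
  have A: "(\<Sum>j = 0..Suc n. f j) = f 0 + f 1 + (\<Sum>j = 2..Suc n. f j)" for n and f :: "nat \<Rightarrow> real"
  proof -
    have "(\<Sum>j = 0..Suc n. f j) = f 0 + (\<Sum>j = 1..Suc n. f j)"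
      by (simp add: sum.atLeast_Suc_atMost)
    also have "(\<Sum>j = 1..Suc n. f j) = f 1 + (\<Sum>j = 2..Suc n. f j)"
      by (simp add: sum.atLeast_Suc_atMost numeral_2_eq_2)
    finally show ?thesis by simp
  qed
  let ?q = "b # c # r"
  have "F x M (a # ?q) = (\<Sum>j = 0..Suc (length ?q). x ^ T (ins j M (a # ?q)))"
    by (simp add: F_def)
  also have "\<dots> = x ^ T (M # a # ?q) + (\<Sum>j = 0..length ?q. x ^ T (a # ins j M ?q))"
    by (subst sum.atLeast0_atMost_Suc_shift) simp
  also have "(\<Sum>j = 0..length ?q. x ^ T (a # ins j M ?q)) =
      x ^ T (a # M # ?q) + x ^ T (a # b # M # c # r) + (\<Sum>j = 2..length ?q. x ^ T (a # ins j M ?q))"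
  proof -
    have "length ?q = Suc (Suc (length r))" by simp
    then show ?thesis by (simp only: A) (simp add: numeral_2_eq_2)
  qed
  also have "(\<Sum>j = 2..length ?q. x ^ T (a # ins j M ?q)) =
      (\<Sum>j = 2..length ?q. x ^ (if tpP a b c then 1 else 0) * x ^ T (ins j M ?q))"
  proof (rule sum.cong[OF refl])
    fix j assume "j \<in> {2..length ?q}"
    then obtain k where "j = Suc (Suc k)" by (metis add_2_eq_Suc atLeastAtMost_iff le_Suc_ex)
    then show "x ^ T (a # ins j M ?q) = x ^ (if tpP a b c then 1 else 0) * x ^ T (ins j M ?q)"
      by (simp add: power_add)
  qed
  also have "\<dots> = x ^ (if tpP a b c then 1 else 0) * (\<Sum>j = 2..length ?q. x ^ T (ins j M ?q))"
    by (rule sum_distrib_left[symmetric])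
  also have "(\<Sum>j = 2..length ?q. x ^ T (ins j M ?q)) = F x M ?q - x ^ T (M # ?q) - x ^ T (b # M # c # r)"
  proof -
    have "length ?q = Suc (Suc (length r))" by simp
    then show ?thesis unfolding F_def by (simp only: A) (simp add: numeral_2_eq_2)
  qed
  finally show ?thesis by simp
qed

lemma F_formula:
  assumes "length p \<ge> 2" "distinct p" "\<forall>y \<in> set p. y < M"
  shows "F x M p = x ^ T p * (real (T p) + 1 + 2 * x + (real (length p) - 2 - real (T p)) * x\<^sup>2)"
  using assms
proof (induction p rule: induct_list012)
  case 1 then show ?case by simp
next
  case (2 a) then show ?case by simp
next
  case (3 a b r)
  show ?case
  proof (cases r)
    case Nil
    with 3 show ?thesis
      by (auto simp: F_def tpP_def numeral_2_eq_2 power2_eq_square algebra_simps)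
  next
    case (Cons c r')
    have IH: "F x M (b # c # r') = x ^ T (b # c # r') * (real (T (b # c # r')) + 1 + 2 * x + (real (length (b # c # r')) - 2 - real (T (b # c # r'))) * x\<^sup>2)"
      using 3 Cons by auto
    have lt: "a < M" "b < M" "c < M" "\<forall>y\<in>set r'. y < M" using 3(5) Cons by auto
    have ne: "a \<noteq> b" "b \<noteq> c" "a \<noteq> c" using 3(4) Cons by auto
    show ?thesis
    proof (cases r')
      case Nil
      show ?thesis
        unfolding Cons Nil
        apply (subst F_step)
        apply (subst IH[unfolded Nil])
        using lt ne
        by (cases "a < b"; cases "b < c")
           (auto simp: tpP_def power2_eq_square algebra_simps)
    next
      case (Cons d s)
      have "c \<noteq> d" using 3(4) \<open>r = c # r'\<close> Cons by auto
      have lt2: "d < M" using lt Cons by auto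
      show ?thesis
        unfolding \<open>r = c # r'\<close> Cons
        apply (subst F_step)
        apply (subst IH[unfolded Cons])
        using lt lt2 ne \<open>c \<noteq> d\<close>
        by (cases "a < b"; cases "b < c"; cases "c < d")
           (auto simp: tpP_def power2_eq_square power_add algebra_simps)
    qed
  qed
qed

lemma perms_iff: "p \<in> perms n \<longleftrightarrow> set p = {1..n} \<and> distinct p"
  by (simp add: perms_def permutations_of_set_def)

lemma perms_length: "p \<in> perms n \<Longrightarrow> length p = n"
  by (metis perms_iff card_atLeastAtMost diff_Suc_1 distinct_card)

lemma set_ins: "set (ins j M p) = insert M (set p)"
proof -
  have "set (ins j M p) = insert M (set (take j p) \<union> set (drop j p))" by (simp add: ins_def)
  also have "set (take j p) \<union> set (drop j p) = set p" by (metis set_append append_take_drop_id)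
  finally show ?thesis .
qed

lemma distinct_ins: "M \<notin> set p \<Longrightarrow> distinct p \<Longrightarrow> distinct (ins j M p)"
proof -
  assume a: "M \<notin> set p" "distinct p"
  have "distinct (take j p @ drop j p)" using a by simp
  moreover have "M \<notin> set (take j p)" "M \<notin> set (drop j p)" using a
    by (auto dest: in_set_takeD in_set_dropD)
  ultimately show ?thesis unfolding ins_def by (auto simp del: append_take_drop_id)
qed

lemma ins_inj:
  assumes "M \<notin> set p" "M \<notin> set p'" "j \<le> length p" "j' \<le> length p'" "ins j M p = ins j' M p'"
  shows "p = p' \<and> j = j'"
proof -
  have "M \<notin> set (take j p)" "M \<notin> set (drop j p)" "M \<notin> set (take j' p')" "M \<notin> set (drop j' p')"
    using assms by (auto dest: in_set_takeD in_set_dropD)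
  with assms(5) have "take j p = take j' p'" "drop j p = drop j' p'"
    unfolding ins_def by (metis append_Cons_eq_iff)+
  then have "p = p'" by (metis append_take_drop_id)
  moreover have "j = j'" using \<open>take j p = take j' p'\<close> assms(3,4) \<open>p = p'\<close>
    by (metis length_take min.absorb2)
  ultimately show ?thesis by simp
qed

lemma perms_Suc_image:
  "perms (Suc n) = (\<lambda>(p, j). ins j (Suc n) p) ` (perms n \<times> {0..n})"
proof (rule set_eqI, rule iffI)
  fix q assume q: "q \<in> perms (Suc n)"
  then have "Suc n \<in> set q" by (simp add: perms_iff)
  then obtain u v where uv: "q = u @ Suc n # v" by (metis split_list)
  have dq: "distinct q" "set q = {1..Suc n}" using q by (auto simp: perms_iff)
  let ?p = "u @ v"
  have "Suc n \<notin> set u" "Suc n \<notin> set v" using dq(1) uv by auto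
  then have "set q = insert (Suc n) (set ?p)" "Suc n \<notin> set ?p" using uv by auto
  then have "set ?p = set q - {Suc n}" by auto
  moreover have "{1..Suc n} - {Suc n} = {1..n}"
    using atLeastAtMostSuc_conv[of 1 n] by simp
  ultimately have "set ?p = {1..n}" using dq by simp
  moreover have "distinct ?p" using dq uv by auto
  ultimately have p: "?p \<in> perms n" by (simp add: perms_iff)
  have "length u \<le> n" using perms_length[OF p] by simp
  moreover have "q = ins (length u) (Suc n) ?p" by (simp add: ins_def uv)
  ultimately show "q \<in> (\<lambda>(p, j). ins j (Suc n) p) ` (perms n \<times> {0..n})"
    using p by (intro image_eqI[where x="(?p, length u)"]) auto
next
  fix q assume "q \<in> (\<lambda>(p, j). ins j (Suc n) p) ` (perms n \<times> {0..n})"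
  then obtain p j where pj: "p \<in> perms n" "j \<le> n" "q = ins j (Suc n) p" by auto
  have "Suc n \<notin> set p" using pj by (auto simp: perms_iff)
  moreover have "insert (Suc n) {1..n} = {1..Suc n}" by auto
  ultimately show "q \<in> perms (Suc n)" using pj
    unfolding perms_iff by (simp add: set_ins distinct_ins)
qed

lemma sum_perms_Suc:
  "(\<Sum>q\<in>perms (Suc n). g q) = (\<Sum>p\<in>perms n. \<Sum>j = 0..n. g (ins j (Suc n) p))"
proof -
  have inj: "inj_on (\<lambda>(p, j). ins j (Suc n) p) (perms n \<times> {0..n})"
  proof (rule inj_onI, clarify)
    fix p j p' j' assume "p \<in> perms n" "j \<in> {0..n}" "p' \<in> perms n" "j' \<in> {0..n}"
      "ins j (Suc n) p = ins j' (Suc n) p'"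
    then show "p = p' \<and> j = j'"
      by (intro ins_inj) (auto simp: perms_iff perms_length[of p n] perms_length[of p' n])
  qed
  have "(\<Sum>q\<in>perms (Suc n). g q) = sum g ((\<lambda>(p, j). ins j (Suc n) p) ` (perms n \<times> {0..n}))"
    by (simp only: perms_Suc_image)
  also have "\<dots> = sum (g \<circ> (\<lambda>(p, j). ins j (Suc n) p)) (perms n \<times> {0..n})"
    by (rule sum.reindex[OF inj])
  also have "\<dots> = (\<Sum>(p,j)\<in>perms n \<times> {0..n}. g (ins j (Suc n) p))"
    by (rule sum.cong) (auto simp: case_prod_unfold)
  also have "\<dots> = (\<Sum>p\<in>perms n. \<Sum>j = 0..n. g (ins j (Suc n) p))"
    by (rule sum.cartesian_product[symmetric])
  finally show ?thesis .
qed

lemma finite_perms[simp]: "finite (perms n)"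
  by (simp add: perms_def)

lemma T_le: "T p \<le> length p - 2"
proof (induction p rule: induct_list012)
  case (3 a b r)
  then show ?case by (cases r) auto
qed auto

definition Rd :: "nat \<Rightarrow> real \<Rightarrow> real" where
  "Rd n x = (\<Sum>p\<in>perms n. real (run p) * x ^ (run p - 1))"

lemma R_deriv: "((R n) has_real_derivative Rd n x) (at x)"
  unfolding R_def[abs_def] Rd_def
  by (auto intro!: derivative_eq_intros)

lemma alg_helper: "x * (x ^ t * (real t + 1 + 2 * x + (real n - 2 - real t) * x\<^sup>2)) =
        x * (1 - x\<^sup>2) * (real (1 + t) * x ^ (1 + t - 1)) + (2 * x + (real n - 1) * x\<^sup>2) * x ^ (1 + t)"
  by (simp add: power2_eq_square algebra_simps)

lemma R_Suc:
  assumes "n \<ge> 2"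
  shows "R (Suc n) x = x * (1 - x\<^sup>2) * Rd n x + (2 * x + (real n - 1) * x\<^sup>2) * R n x"
proof -
  have "R (Suc n) x = (\<Sum>p\<in>perms n. \<Sum>j = 0..n. x ^ run (ins j (Suc n) p))"
    unfolding R_def by (rule sum_perms_Suc)
  also have "\<dots> = (\<Sum>p\<in>perms n. x * (1 - x\<^sup>2) * (real (run p) * x ^ (run p - 1)) + (2 * x + (real n - 1) * x\<^sup>2) * x ^ run p)"
  proof (rule sum.cong[OF refl])
    fix p assume p: "p \<in> perms n"
    have lp: "length p = n" using perms_length[OF p] .
    have "(\<Sum>j = 0..n. x ^ run (ins j (Suc n) p)) = x * F x (Suc n) p"
      unfolding F_def lp run_cnt3 T_def[symmetric] by (simp add: sum_distrib_left)
    also have "F x (Suc n) p = x ^ T p * (real (T p) + 1 + 2 * x + (real (length p) - 2 - real (T p)) * x\<^sup>2)"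
      by (rule F_formula) (use p assms lp in \<open>auto simp: perms_iff\<close>)
    finally show "(\<Sum>j = 0..n. x ^ run (ins j (Suc n) p)) = x * (1 - x\<^sup>2) * (real (run p) * x ^ (run p - 1)) + (2 * x + (real n - 1) * x\<^sup>2) * x ^ run p"
      unfolding run_cnt3 T_def[symmetric] lp by (rule trans[OF _ alg_helper])
  qed
  also have "\<dots> = x * (1 - x\<^sup>2) * Rd n x + (2 * x + (real n - 1) * x\<^sup>2) * R n x"
    by (simp add: R_def Rd_def sum.distrib sum_distrib_left)
  finally show ?thesis .
qed

lemma letter_L: "1 \<le> k \<Longrightarrow> k \<le> length u \<Longrightarrow> letter (u @ m # v) k = letter u k"
proof -
  assume "1 \<le> k" "k \<le> length u"
  then have "k - 1 < length u" by linarith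
  then show ?thesis by (simp add: letter_def nth_append)
qed

lemma letter_M: "letter (u @ m # v) (Suc (length u)) = m"
  by (simp add: letter_def nth_append)

lemma letter_R: "1 \<le> k \<Longrightarrow> letter (u @ m # v) (Suc (length u) + k) = letter v k"
  by (simp add: letter_def nth_append)

lemma letter_R': "Suc (length u) < k \<Longrightarrow> letter (u @ m # v) k = letter v (k - Suc (length u))"
  using letter_R[of "k - Suc (length u)" u m v] by simp

lemma letter_in_set: "1 \<le> k \<Longrightarrow> k \<le> length u \<Longrightarrow> letter u k \<in> set u"
  by (simp add: letter_def)

lemma set_letters: "set u = {letter u j | j. 1 \<le> j \<and> j \<le> length u}"
proof (rule set_eqI, rule iffI)
  fix y assume "y \<in> set u"
  then obtain k where "k < length u" "u ! k = y" by (metis in_set_conv_nth)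
  then show "y \<in> {letter u j | j. 1 \<le> j \<and> j \<le> length u}"
    by (intro CollectI exI[of _ "Suc k"]) (simp add: letter_def)
qed (auto simp: letter_in_set)

lemma split_forall:
  "(\<forall>i\<in>{2..a+b}. P i) \<longleftrightarrow>
   (\<forall>i\<in>{2..a-1}. P i) \<and> (2 \<le> a \<longrightarrow> P a) \<and> (1 \<le> a \<longrightarrow> 1 \<le> b \<longrightarrow> P (a+1)) \<and>
   (2 \<le> b \<longrightarrow> P (a+2)) \<and> (\<forall>i\<in>{2..b-1}. P (Suc a + i))"
proof (intro iffI)
  assume H: "\<forall>i\<in>{2..a+b}. P i"
  show "(\<forall>i\<in>{2..a-1}. P i) \<and> (2 \<le> a \<longrightarrow> P a) \<and> (1 \<le> a \<longrightarrow> 1 \<le> b \<longrightarrow> P (a+1)) \<and>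
   (2 \<le> b \<longrightarrow> P (a+2)) \<and> (\<forall>i\<in>{2..b-1}. P (Suc a + i))"
    by (intro conjI impI ballI; rule H[rule_format]) auto
next
  assume H: "(\<forall>i\<in>{2..a-1}. P i) \<and> (2 \<le> a \<longrightarrow> P a) \<and> (1 \<le> a \<longrightarrow> 1 \<le> b \<longrightarrow> P (a+1)) \<and>
   (2 \<le> b \<longrightarrow> P (a+2)) \<and> (\<forall>i\<in>{2..b-1}. P (Suc a + i))"
  show "\<forall>i\<in>{2..a+b}. P i"
  proof
    fix i assume i: "i \<in> {2..a+b}"
    consider "i \<le> a - 1" | "i = a" | "i = a + 1" | "i = a + 2" | "i \<ge> a + 3" by linarith
    then show "P i"
    proof cases
      case 1 then show ?thesis using H i by auto
    next
      case 2 then show ?thesis using H i by auto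
    next
      case 3 then show ?thesis using H i by auto
    next
      case 4 then show ?thesis using H i by auto
    next
      case 5
      then have "i = Suc a + (i - Suc a)" "i - Suc a \<in> {2..b-1}" using i by auto
      then show ?thesis using H by metis
    qed
  qed
qed

definition dd :: "nat list \<Rightarrow> nat \<Rightarrow> bool" where
  "dd p i \<longleftrightarrow> letter p (i-1) > letter p i \<and> letter p i > letter p (i+1)"

definition vl :: "nat list \<Rightarrow> nat \<Rightarrow> bool" where
  "vl p i \<longleftrightarrow> letter p (i-1) > letter p i \<and> letter p i < letter p (i+1)"

definition C1 :: "nat list \<Rightarrow> bool" where
  "C1 p \<longleftrightarrow> (\<forall>i\<in>{2..length p - 1}. \<not> dd p i)"

definition C2 :: "nat list \<Rightarrow> bool" where
  "C2 p \<longleftrightarrow> letter p (length p - 1) < letter p (length p)"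

definition C3 :: "nat list \<Rightarrow> bool" where
  "C3 p \<longleftrightarrow> (\<forall>i\<in>{2..length p - 1}. vl p i \<longrightarrow> Max (w2_letters p i) < Max (w4_letters p i))"

lemma andre_C: "andre p \<longleftrightarrow> C1 p \<and> C2 p \<and> C3 p"
  unfolding andre_def C1_def C2_def C3_def dd_def vl_def by blast

lemma C1_short: "length p \<le> 2 \<Longrightarrow> C1 p" by (auto simp: C1_def)
lemma C3_short: "length p \<le> 2 \<Longrightarrow> C3 p" by (auto simp: C3_def)

lemma letter_inj: "distinct p \<Longrightarrow> 1 \<le> i \<Longrightarrow> i \<le> length p \<Longrightarrow> 1 \<le> j \<Longrightarrow> j \<le> length p \<Longrightarrow>
  letter p i = letter p j \<longleftrightarrow> i = j"
  unfolding letter_def by (subst nth_eq_iff_index_eq) auto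

context
  fixes u v :: "nat list" and m :: nat
  assumes mless: "\<forall>y \<in> set u. m < y" "\<forall>y \<in> set v. m < y"
  and dist: "distinct (u @ m # v)"
begin

lemma du: "distinct u" and dv: "distinct v" using dist by auto

lemma u_last_ne: "2 \<le> length u \<Longrightarrow> letter u (length u - 1) \<noteq> letter u (length u)"
  using letter_inj[OF du, of "length u - 1" "length u"] by auto

lemma len_p: "length (u @ m # v) - 1 = length u + length v" by simp

lemma uless: "1 \<le> k \<Longrightarrow> k \<le> length u \<Longrightarrow> m < letter u k"
  using mless letter_in_set by blast
lemma vless: "1 \<le> k \<Longrightarrow> k \<le> length v \<Longrightarrow> m < letter v k"
  using mless letter_in_set by blast

lemma dd_u: "i \<in> {2..length u - 1} \<Longrightarrow> dd (u @ m # v) i \<longleftrightarrow> dd u i"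
proof -
  assume i: "i \<in> {2..length u - 1}"
  have "letter (u @ m # v) (i - 1) = letter u (i - 1)" "letter (u @ m # v) i = letter u i"
    "letter (u @ m # v) (i + 1) = letter u (i + 1)"
    by (rule letter_L; use i in auto)+
  then show ?thesis unfolding dd_def by simp
qed

lemma dd_a: "2 \<le> length u \<Longrightarrow> dd (u @ m # v) (length u) \<longleftrightarrow> letter u (length u - 1) > letter u (length u)"
proof -
  assume a: "2 \<le> length u"
  have "letter (u @ m # v) (length u + 1) = m" using letter_M by simp
  moreover have "m < letter u (length u)" using a uless by simp
  ultimately show ?thesis unfolding dd_def using a by (simp add: letter_L)
qed

lemma not_dd_a1: "1 \<le> length v \<Longrightarrow> \<not> dd (u @ m # v) (length u + 1)"
  unfolding dd_def using letter_M letter_R[of 1 u m v] vless[of 1] by simp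

lemma not_dd_a2: "1 \<le> length v \<Longrightarrow> \<not> dd (u @ m # v) (length u + 2)"
  unfolding dd_def using letter_M letter_R[of 1 u m v] vless[of 1] by (simp add: numeral_2_eq_2)

lemma dd_v: "i \<in> {2..length v - 1} \<Longrightarrow> dd (u @ m # v) (Suc (length u) + i) \<longleftrightarrow> dd v i"
proof -
  assume i: "i \<in> {2..length v - 1}"
  have e1: "Suc (length u) + i - 1 = Suc (length u) + (i - 1)" using i by auto
  have e2: "Suc (length u) + i + 1 = Suc (length u) + (i + 1)" by simp
  have "letter (u @ m # v) (Suc (length u) + (i - 1)) = letter v (i - 1)"
    "letter (u @ m # v) (Suc (length u) + (i + 1)) = letter v (i + 1)"
    "letter (u @ m # v) (Suc (length u) + i) = letter v i"
    by (rule letter_R; use i in auto)+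
  then show ?thesis unfolding dd_def e1 e2 by simp
qed

lemma C1_split: "C1 (u @ m # v) \<longleftrightarrow> C1 u \<and> (2 \<le> length u \<longrightarrow> letter u (length u - 1) < letter u (length u)) \<and> C1 v"
proof -
  have "C1 (u @ m # v) \<longleftrightarrow> (\<forall>i\<in>{2..length u + length v}. \<not> dd (u @ m # v) i)"
    unfolding C1_def len_p ..
  also have "\<dots> \<longleftrightarrow> (\<forall>i\<in>{2..length u - 1}. \<not> dd (u @ m # v) i) \<and> (2 \<le> length u \<longrightarrow> \<not> dd (u @ m # v) (length u))
     \<and> (1 \<le> length u \<longrightarrow> 1 \<le> length v \<longrightarrow> \<not> dd (u @ m # v) (length u + 1))
     \<and> (2 \<le> length v \<longrightarrow> \<not> dd (u @ m # v) (length u + 2))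
     \<and> (\<forall>i\<in>{2..length v - 1}. \<not> dd (u @ m # v) (Suc (length u) + i))"
    by (rule split_forall)
  also have "\<dots> \<longleftrightarrow> C1 u \<and> (2 \<le> length u \<longrightarrow> letter u (length u - 1) < letter u (length u)) \<and> C1 v"
    unfolding C1_def using dd_u dd_a not_dd_a1 not_dd_a2 dd_v u_last_ne
    by (auto simp: not_less order_le_less)
  finally show ?thesis .
qed

lemma C2_split: "C2 (u @ m # v) \<longleftrightarrow> v \<noteq> [] \<and> (2 \<le> length v \<longrightarrow> C2 v)"
proof (cases v rule: rev_cases)
  case Nil
  show ?thesis
  proof (cases "u = []")
    case True then show ?thesis using Nil by (simp add: C2_def letter_def)
  next
    case False
    then have "m < letter u (length u)" using uless[of "length u"] by (simp add: Suc_leI)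
    moreover have "letter (u @ m # v) (length u) = letter u (length u)"
      using False by (intro letter_L) (auto simp: Suc_leI)
    ultimately show ?thesis using Nil letter_M[of u m v] by (simp add: C2_def)
  qed
next
  case (snoc w y)
  show ?thesis
  proof (cases "w = []")
    case True
    then have "letter (u @ m # v) (Suc (length u) + 1) = y" using snoc letter_R[of 1 u m v]
      by (simp add: letter_def)
    moreover have "m < y" using mless snoc by auto
    ultimately show ?thesis using True snoc letter_M[of u m v] by (simp add: C2_def)
  next
    case False
    then have lv: "2 \<le> length v" using snoc by (cases w) auto
    have e1: "length (u @ m # v) - 1 = Suc (length u) + (length v - 1)" using lv by simp
    have e2: "length (u @ m # v) = Suc (length u) + length v" by simp
    have "C2 (u @ m # v) \<longleftrightarrow> letter (u @ m # v) (Suc (length u) + (length v - 1)) < letter (u @ m # v) (Suc (length u) + length v)"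
      unfolding C2_def by (subst e1, subst e2, rule refl)
    also have "\<dots> \<longleftrightarrow> C2 v"
    proof -
      have f1: "letter (u @ m # v) (Suc (length u) + (length v - 1)) = letter v (length v - 1)"
        by (rule letter_R) (use lv in auto)
      have f2: "letter (u @ m # v) (Suc (length u) + length v) = letter v (length v)"
        by (rule letter_R) (use lv in auto)
      show ?thesis unfolding C2_def by (simp only: f1 f2)
    qed
    finally show ?thesis using lv by auto
  qed
qed

lemma w2_u: "1 \<le> i \<Longrightarrow> i \<le> length u \<Longrightarrow> w2_letters (u @ m # v) i = w2_letters u i"
  unfolding w2_letters_def
proof (rule set_eqI, rule iffI)
  fix x assume i: "1 \<le> i" "i \<le> length u"
  assume "x \<in> {letter u j |j. 1 \<le> j \<and> j < i \<and> (\<forall>k. j \<le> k \<and> k < i \<longrightarrow> letter u i < letter u k)}"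
  then obtain j where "x = letter u j" "1 \<le> j" "j < i" "\<forall>k. j \<le> k \<and> k < i \<longrightarrow> letter u i < letter u k"
    by blast
  then show "x \<in> {letter (u @ m # v) j |j. 1 \<le> j \<and> j < i \<and> (\<forall>k. j \<le> k \<and> k < i \<longrightarrow> letter (u @ m # v) i < letter (u @ m # v) k)}"
    using i by (intro CollectI exI[of _ j]) (auto simp: letter_L)
qed (auto simp: letter_L)

lemma w4_u: 
  assumes i: "1 \<le> i" "i \<le> length u"
  shows "w4_letters (u @ m # v) i = w4_letters u i"
proof (rule set_eqI, rule iffI)
  fix x assume "x \<in> w4_letters (u @ m # v) i"
  then obtain j where j: "x = letter (u @ m # v) j" "i < j" "j \<le> length (u @ m # v)"
    "\<forall>k. i < k \<and> k \<le> j \<longrightarrow> letter (u @ m # v) k > letter (u @ m # v) i"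
    unfolding w4_letters_def by blast
  have ju: "j \<le> length u"
  proof (rule ccontr)
    assume "\<not> j \<le> length u"
    then have "letter (u @ m # v) (Suc (length u)) > letter (u @ m # v) i" using j(4) i by auto
    then show False using letter_M[of u m v] letter_L[OF i, of m v] uless[OF i] by simp
  qed
  show "x \<in> w4_letters u i"
    unfolding w4_letters_def using j ju i by (auto simp: letter_L intro!: exI[of _ j])
next
  fix x assume "x \<in> w4_letters u i"
  then obtain j where j: "x = letter u j" "i < j" "j \<le> length u"
    "\<forall>k. i < k \<and> k \<le> j \<longrightarrow> letter u k > letter u i"
    unfolding w4_letters_def by blast
  show "x \<in> w4_letters (u @ m # v) i"
    unfolding w4_letters_def using j i by (auto simp: letter_L intro!: exI[of _ j])
qed

lemma w2_M: "w2_letters (u @ m # v) (Suc (length u)) = set u"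
  unfolding w2_letters_def set_letters[of u]
proof (rule set_eqI, rule iffI)
  fix x assume "x \<in> {letter u j |j. 1 \<le> j \<and> j \<le> length u}"
  then obtain j where "x = letter u j" "1 \<le> j" "j \<le> length u" by blast
  then show "x \<in> {letter (u @ m # v) j |j. 1 \<le> j \<and> j < Suc (length u) \<and> (\<forall>k. j \<le> k \<and> k < Suc (length u) \<longrightarrow> letter (u @ m # v) (Suc (length u)) < letter (u @ m # v) k)}"
    using uless by (intro CollectI exI[of _ j]) (auto simp: letter_L letter_M)
qed (auto simp: letter_L letter_M)

lemma w4_M: "w4_letters (u @ m # v) (Suc (length u)) = set v"
proof (rule set_eqI, rule iffI)
  fix x assume "x \<in> w4_letters (u @ m # v) (Suc (length u))"
  then obtain j where j: "x = letter (u @ m # v) j" "Suc (length u) < j" "j \<le> length (u @ m # v)"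
    unfolding w4_letters_def by blast
  then have "x = letter v (j - Suc (length u))" using letter_R[of "j - Suc (length u)" u m v] by simp
  moreover have "1 \<le> j - Suc (length u)" "j - Suc (length u) \<le> length v" using j by auto
  ultimately show "x \<in> set v" using letter_in_set by blast
next
  fix x assume "x \<in> set v"
  then obtain j where j: "x = letter v j" "1 \<le> j" "j \<le> length v" unfolding set_letters[of v] by blast
  have "\<forall>k. Suc (length u) < k \<and> k \<le> Suc (length u) + j \<longrightarrow> letter (u @ m # v) k > letter (u @ m # v) (Suc (length u))"
  proof (intro allI impI)
    fix k assume k: "Suc (length u) < k \<and> k \<le> Suc (length u) + j"
    then have "letter (u @ m # v) k = letter v (k - Suc (length u))"
      using letter_R' by simp
    moreover have "m < letter v (k - Suc (length u))" using k j by (intro vless) auto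
    ultimately show "letter (u @ m # v) k > letter (u @ m # v) (Suc (length u))" by (simp add: letter_M)
  qed
  then show "x \<in> w4_letters (u @ m # v) (Suc (length u))"
    unfolding w4_letters_def using j letter_R[of j u m v]
    by (intro CollectI exI[of _ "Suc (length u) + j"]) auto
qed

lemma w2_v:
  assumes i: "1 \<le> i" "i \<le> length v"
  shows "w2_letters (u @ m # v) (Suc (length u) + i) = w2_letters v i"
proof (rule set_eqI, rule iffI)
  let ?p = "u @ m # v" and ?a = "Suc (length u)"
  have Li: "letter ?p (?a + i) = letter v i" using letter_R i by simp
  fix x assume "x \<in> w2_letters ?p (?a + i)"
  then obtain j where j: "x = letter ?p j" "1 \<le> j" "j < ?a + i"
    "\<forall>k. j \<le> k \<and> k < ?a + i \<longrightarrow> letter ?p k > letter ?p (?a + i)"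
    unfolding w2_letters_def by blast
  have ja: "j > ?a"
  proof (rule ccontr)
    assume "\<not> j > ?a"
    then have "letter ?p ?a > letter ?p (?a + i)" using j(4) i by auto
    then show False using letter_M[of u m v] Li vless[OF i] by simp
  qed
  have "x = letter v (j - ?a)" using j ja letter_R[of "j - ?a" u m v] by simp
  moreover have "\<forall>k. j - ?a \<le> k \<and> k < i \<longrightarrow> letter v k > letter v i"
  proof (intro allI impI)
    fix k assume k: "j - ?a \<le> k \<and> k < i"
    then have "letter ?p (?a + k) > letter ?p (?a + i)" using j(4) ja by auto
    then show "letter v k > letter v i" using Li letter_R[of k u m v] k ja by auto
  qed
  ultimately show "x \<in> w2_letters v i"
    unfolding w2_letters_def using j ja by (intro CollectI exI[of _ "j - ?a"]) auto
next
  let ?p = "u @ m # v" and ?a = "Suc (length u)"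
  have Li: "letter ?p (?a + i) = letter v i" using letter_R i by simp
  fix x assume "x \<in> w2_letters v i"
  then obtain j where j: "x = letter v j" "1 \<le> j" "j < i"
    "\<forall>k. j \<le> k \<and> k < i \<longrightarrow> letter v k > letter v i"
    unfolding w2_letters_def by blast
  have "\<forall>k. ?a + j \<le> k \<and> k < ?a + i \<longrightarrow> letter ?p k > letter ?p (?a + i)"
  proof (intro allI impI)
    fix k assume k: "?a + j \<le> k \<and> k < ?a + i"
    then have "letter ?p k = letter v (k - ?a)" using letter_R' j by simp
    moreover have "j \<le> k - ?a \<and> k - ?a < i" using k by arith
    then have "letter v (k - ?a) > letter v i" using j(4) by blast
    ultimately show "letter ?p k > letter ?p (?a + i)" using Li by simp
  qed
  then show "x \<in> w2_letters ?p (?a + i)"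
    unfolding w2_letters_def using j letter_R[of j u m v]
    by (intro CollectI exI[of _ "?a + j"]) auto
qed

lemma w4_v:
  assumes i: "1 \<le> i" "i \<le> length v"
  shows "w4_letters (u @ m # v) (Suc (length u) + i) = w4_letters v i"
proof (rule set_eqI, rule iffI)
  let ?p = "u @ m # v" and ?a = "Suc (length u)"
  have Li: "letter ?p (?a + i) = letter v i" using letter_R i by simp
  fix x assume "x \<in> w4_letters ?p (?a + i)"
  then obtain j where j: "x = letter ?p j" "?a + i < j" "j \<le> length ?p"
    "\<forall>k. ?a + i < k \<and> k \<le> j \<longrightarrow> letter ?p k > letter ?p (?a + i)"
    unfolding w4_letters_def by blast
  have "x = letter v (j - ?a)" using j i letter_R[of "j - ?a" u m v] by simp
  moreover have "\<forall>k. i < k \<and> k \<le> j - ?a \<longrightarrow> letter v k > letter v i"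
  proof (intro allI impI)
    fix k assume k: "i < k \<and> k \<le> j - ?a"
    then have "letter ?p (?a + k) > letter ?p (?a + i)" using j(4) by auto
    then show "letter v k > letter v i" using Li letter_R[of k u m v] k i by auto
  qed
  ultimately show "x \<in> w4_letters v i"
    unfolding w4_letters_def using j by (intro CollectI exI[of _ "j - ?a"]) auto
next
  let ?p = "u @ m # v" and ?a = "Suc (length u)"
  have Li: "letter ?p (?a + i) = letter v i" using letter_R i by simp
  fix x assume "x \<in> w4_letters v i"
  then obtain j where j: "x = letter v j" "i < j" "j \<le> length v"
    "\<forall>k. i < k \<and> k \<le> j \<longrightarrow> letter v k > letter v i"
    unfolding w4_letters_def by blast
  have "\<forall>k. ?a + i < k \<and> k \<le> ?a + j \<longrightarrow> letter ?p k > letter ?p (?a + i)"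
  proof (intro allI impI)
    fix k assume k: "?a + i < k \<and> k \<le> ?a + j"
    then have "letter ?p k = letter v (k - ?a)" using letter_R' i by simp
    moreover have "i < k - ?a \<and> k - ?a \<le> j" using k by arith
    then have "letter v (k - ?a) > letter v i" using j(4) by blast
    ultimately show "letter ?p k > letter ?p (?a + i)" using Li by simp
  qed
  then show "x \<in> w4_letters ?p (?a + i)"
    unfolding w4_letters_def using j i letter_R[of j u m v]
    by (intro CollectI exI[of _ "?a + j"]) auto
qed

lemma vl_u: "i \<in> {2..length u - 1} \<Longrightarrow> vl (u @ m # v) i \<longleftrightarrow> vl u i"
proof -
  assume i: "i \<in> {2..length u - 1}"
  have "letter (u @ m # v) (i - 1) = letter u (i - 1)" "letter (u @ m # v) i = letter u i"
    "letter (u @ m # v) (i + 1) = letter u (i + 1)"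
    by (rule letter_L; use i in auto)+
  then show ?thesis unfolding vl_def by simp
qed

lemma not_vl_a: "2 \<le> length u \<Longrightarrow> \<not> vl (u @ m # v) (length u)"
proof -
  assume a: "2 \<le> length u"
  have "letter (u @ m # v) (length u + 1) = m" using letter_M by simp
  moreover have "m < letter u (length u)" using a uless by simp
  moreover have "letter (u @ m # v) (length u) = letter u (length u)" using a by (intro letter_L) auto
  ultimately show ?thesis unfolding vl_def by simp
qed

lemma vl_a1: "1 \<le> length u \<Longrightarrow> 1 \<le> length v \<Longrightarrow> vl (u @ m # v) (length u + 1)"
proof -
  assume a: "1 \<le> length u" "1 \<le> length v"
  have "letter (u @ m # v) (length u) = letter u (length u)" using a by (intro letter_L) auto
  moreover have "m < letter u (length u)" using a uless by simp
  moreover have "letter (u @ m # v) (Suc (length u) + 1) = letter v 1" by (rule letter_R) simp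
  moreover have "m < letter v 1" using a vless by simp
  ultimately show ?thesis unfolding vl_def using letter_M[of u m v] by simp
qed

lemma not_vl_a2: "1 \<le> length v \<Longrightarrow> \<not> vl (u @ m # v) (length u + 2)"
  unfolding vl_def using letter_M letter_R[of 1 u m v] vless[of 1] by (simp add: numeral_2_eq_2)

lemma vl_v: "i \<in> {2..length v - 1} \<Longrightarrow> vl (u @ m # v) (Suc (length u) + i) \<longleftrightarrow> vl v i"
proof -
  assume i: "i \<in> {2..length v - 1}"
  have e1: "Suc (length u) + i - 1 = Suc (length u) + (i - 1)" using i by auto
  have e2: "Suc (length u) + i + 1 = Suc (length u) + (i + 1)" by simp
  have "letter (u @ m # v) (Suc (length u) + (i - 1)) = letter v (i - 1)"
    "letter (u @ m # v) (Suc (length u) + (i + 1)) = letter v (i + 1)"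
    "letter (u @ m # v) (Suc (length u) + i) = letter v i"
    by (rule letter_R; use i in auto)+
  then show ?thesis unfolding vl_def e1 e2 by simp
qed

lemma C3_split: "C3 (u @ m # v) \<longleftrightarrow> C3 u \<and> (u \<noteq> [] \<and> v \<noteq> [] \<longrightarrow> Max (set u) < Max (set v)) \<and> C3 v"
proof -
  let ?p = "u @ m # v"
  let ?P = "\<lambda>i. vl ?p i \<longrightarrow> Max (w2_letters ?p i) < Max (w4_letters ?p i)"
  have "C3 ?p \<longleftrightarrow> (\<forall>i\<in>{2..length u + length v}. ?P i)"
    unfolding C3_def len_p ..
  also have "\<dots> \<longleftrightarrow> (\<forall>i\<in>{2..length u - 1}. ?P i) \<and> (2 \<le> length u \<longrightarrow> ?P (length u))
     \<and> (1 \<le> length u \<longrightarrow> 1 \<le> length v \<longrightarrow> ?P (length u + 1))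
     \<and> (2 \<le> length v \<longrightarrow> ?P (length u + 2))
     \<and> (\<forall>i\<in>{2..length v - 1}. ?P (Suc (length u) + i))"
    by (rule split_forall)
  also have "(\<forall>i\<in>{2..length u - 1}. ?P i) \<longleftrightarrow> C3 u"
    unfolding C3_def
  proof (intro ball_cong refl)
    fix i assume i: "i \<in> {2..length u - 1}"
    then have "1 \<le> i" "i \<le> length u" by auto
    then show "?P i \<longleftrightarrow> (vl u i \<longrightarrow> Max (w2_letters u i) < Max (w4_letters u i))"
      using vl_u[OF i] w2_u w4_u by simp
  qed
  also have "(2 \<le> length u \<longrightarrow> ?P (length u)) \<longleftrightarrow> True" using not_vl_a by simp
  also have "(1 \<le> length u \<longrightarrow> 1 \<le> length v \<longrightarrow> ?P (length u + 1)) \<longleftrightarrow>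
      (u \<noteq> [] \<and> v \<noteq> [] \<longrightarrow> Max (set u) < Max (set v))"
    using vl_a1 w2_M w4_M by (auto simp: Suc_le_eq)
  also have "(2 \<le> length v \<longrightarrow> ?P (length u + 2)) \<longleftrightarrow> True" using not_vl_a2 by simp
  also have "(\<forall>i\<in>{2..length v - 1}. ?P (Suc (length u) + i)) \<longleftrightarrow> C3 v"
    unfolding C3_def
  proof (intro ball_cong refl)
    fix i assume i: "i \<in> {2..length v - 1}"
    then have "1 \<le> i" "i \<le> length v" by auto
    then show "?P (Suc (length u) + i) \<longleftrightarrow> (vl v i \<longrightarrow> Max (w2_letters v i) < Max (w4_letters v i))"
      using vl_v[OF i] w2_v w4_v by simp
  qed
  finally show ?thesis by simp
qed

theorem andre_split:
  "andre (u @ m # v) \<longleftrightarrow> v \<noteq> [] \<and> (u \<noteq> [] \<longrightarrow> Max (set u) < Max (set v)) \<and>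
     (2 \<le> length u \<longrightarrow> andre u) \<and> (2 \<le> length v \<longrightarrow> andre v)"
proof -
  have cu: "length u < 2 \<Longrightarrow> C1 u \<and> C3 u" by (auto intro: C1_short C3_short)
  have cv: "length v < 2 \<Longrightarrow> C1 v \<and> C3 v" by (auto intro: C1_short C3_short)
  have C2u: "2 \<le> length u \<Longrightarrow> C2 u \<longleftrightarrow> letter u (length u - 1) < letter u (length u)"
    by (simp add: C2_def)
  show ?thesis
    unfolding andre_C C1_split C2_split C3_split
    using cu cv C2u by (cases "length u < 2"; cases "length v < 2") auto
qed


end

definition DS where "DS p = cnt2 (\<lambda>a b. a > b) p"

lemma DS_Nil[simp]: "DS [] = 0" and DS_one[simp]: "DS [a] = 0"
  by (auto simp: DS_def intro: cnt2_short)

lemma DS_cons2[simp]: "DS (a # b # r) = (if a > b then 1 else 0) + DS (b # r)"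
  unfolding DS_def by (rule cnt2_cons)

lemma DS_m: "\<forall>y\<in>set v. m < y \<Longrightarrow> DS (m # v) = DS v"
  by (cases v) auto

lemma DS_split:
  assumes "\<forall>y\<in>set u. m < y" "\<forall>y\<in>set v. m < y"
  shows "DS (u @ m # v) = DS u + DS v + (if u = [] then 0 else 1)"
  using assms
proof (induction u rule: induct_list012)
  case 1
  then show ?case using DS_m by simp
next
  case (2 x)
  then show ?case using DS_m[of v m] by simp
next
  case (3 x y r)
  have "DS ((x # y # r) @ m # v) = (if x > y then 1 else 0) + DS ((y # r) @ m # v)" by simp
  also have "DS ((y # r) @ m # v) = DS (y # r) + DS v + 1" using 3 by simp
  finally show ?case by simp
qed

lemma des_split:
  assumes "\<forall>y\<in>set u. m < y" "\<forall>y\<in>set v. m < y"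
  shows "des (u @ m # v) = des u + des v + (if u = [] then 0 else 1)"
  using DS_split[OF assms] by (simp add: des_cnt2 DS_def)

definition AP :: "nat set \<Rightarrow> nat list set" where
  "AP S = {p \<in> permutations_of_set S. length p \<le> 1 \<or> andre p}"

definition A :: "nat set \<Rightarrow> real poly" where
  "A S = (\<Sum>p\<in>AP S. monom 1 (des p))"

lemma finite_AP[simp]: "finite (AP S)"
proof (cases "finite S")
  case True then show ?thesis unfolding AP_def by simp
next
  case False then show ?thesis unfolding AP_def by (simp add: permutations_of_set_infinite)
qed

lemma AP_iff: "p \<in> AP S \<longleftrightarrow> set p = S \<and> distinct p \<and> (length p \<le> 1 \<or> andre p)"
  by (simp add: AP_def permutations_of_set_def)

lemma AP_decomp:
  assumes fin: "finite S" and card: "card S \<ge> 2"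
  defines "m \<equiv> Min S" and "M \<equiv> Max S"
  shows "AP S = (\<Union>U\<in>Pow (S - {m, M}). (\<lambda>(u, v). u @ m # v) ` (AP U \<times> AP (S - {m} - U)))"
proof -
  have ne: "S \<noteq> {}" using card by auto
  have mS: "m \<in> S" and MS: "M \<in> S" using fin ne by (auto simp: m_def M_def)
  have mM: "m < M"
  proof -
    have "\<not> card S \<le> Suc 0" using card by simp
    then obtain x y where "x \<in> S" "y \<in> S" "x \<noteq> y" using card_le_Suc0_iff_eq[OF fin] by blast
    moreover have "m \<le> x" "m \<le> y" "x \<le> M" "y \<le> M" using fin \<open>x \<in> S\<close> \<open>y \<in> S\<close>
      by (auto simp: m_def M_def)
    ultimately show ?thesis by (cases "x < y") auto
  qed
  have mlt: "\<And>y. y \<in> S \<Longrightarrow> y \<noteq> m \<Longrightarrow> m < y"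
  proof -
    fix y assume "y \<in> S" "y \<noteq> m"
    moreover have "m \<le> y" using fin \<open>y \<in> S\<close> unfolding m_def by simp
    ultimately show "m < y" by (simp add: le_neq_trans)
  qed
  have Mge: "\<And>y. y \<in> S \<Longrightarrow> y \<le> M" using fin unfolding M_def by simp
  show ?thesis
  proof (rule set_eqI, rule iffI)
    fix p assume p: "p \<in> AP S"
    then have sp: "set p = S" and dp: "distinct p" and ap': "length p \<le> 1 \<or> andre p"
      by (auto simp: AP_iff)
    have "length p = card S" using sp dp distinct_card by metis
    then have ap: "andre p" using ap' card by auto
    from mS sp obtain u v where uv: "p = u @ m # v" by (metis split_list)
    have mu: "m \<notin> set u" and mv: "m \<notin> set v" and duv: "set u \<inter> set v = {}"
      using dp uv by auto
    have gu: "\<forall>y\<in>set u. m < y" using mu sp uv mlt by auto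
    have gv: "\<forall>y\<in>set v. m < y" using mv sp uv mlt by auto
    have dist: "distinct (u @ m # v)" using dp uv by simp
    from ap[unfolded uv] have H: "v \<noteq> [] \<and> (u \<noteq> [] \<longrightarrow> Max (set u) < Max (set v)) \<and>
      (2 \<le> length u \<longrightarrow> andre u) \<and> (2 \<le> length v \<longrightarrow> andre v)"
      using andre_split[OF gu gv dist] by simp
    have Mu: "M \<notin> set u"
    proof
      assume "M \<in> set u"
      then have "u \<noteq> []" by auto
      have "Max (set v) \<le> M" using Mge sp uv H by auto
      moreover have "M \<le> Max (set u)" using \<open>M \<in> set u\<close> by simp
      moreover have "Max (set u) < Max (set v)" using H \<open>u \<noteq> []\<close> by blast
      ultimately show False by linarith
    qed
    let ?U = "set u"
    have U: "?U \<in> Pow (S - {m, M})" using sp uv mu Mu by auto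
    have V: "set v = S - {m} - ?U" using sp uv mv duv by auto
    have "u \<in> AP ?U" using dist H by (auto simp: AP_iff)
    moreover have "v \<in> AP (S - {m} - ?U)"
    proof -
      have "v \<in> AP (set v)" using dist H by (auto simp: AP_iff)
      then show ?thesis by (subst V[symmetric])
    qed
    ultimately have "(u, v) \<in> AP ?U \<times> AP (S - {m} - ?U)" by simp
    then have "p \<in> (\<lambda>(u, v). u @ m # v) ` (AP ?U \<times> AP (S - {m} - ?U))"
      by (rule rev_image_eqI) (simp add: uv)
    then show "p \<in> (\<Union>U\<in>Pow (S - {m, M}). (\<lambda>(u, v). u @ m # v) ` (AP U \<times> AP (S - {m} - U)))"
      by (rule UN_I[OF U])
  next
    fix p assume "p \<in> (\<Union>U\<in>Pow (S - {m, M}). (\<lambda>(u, v). u @ m # v) ` (AP U \<times> AP (S - {m} - U)))"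
    then obtain U where U': "U \<in> Pow (S - {m, M})" and pU: "p \<in> (\<lambda>(u, v). u @ m # v) ` (AP U \<times> AP (S - {m} - U))"
      by (rule UN_E)
    from pU obtain w where w: "w \<in> AP U \<times> AP (S - {m} - U)" and pw: "p = (\<lambda>(u, v). u @ m # v) w"
      by (rule imageE)
    obtain u v where wuv: "w = (u, v)" by (cases w)
    have U: "U \<subseteq> S - {m, M}" using U' by simp
    have u: "u \<in> AP U" and v: "v \<in> AP (S - {m} - U)" using w wuv by auto
    have p: "p = u @ m # v" using pw wuv by simp
    have su: "set u = U" "distinct u" "length u \<le> 1 \<or> andre u" using u by (auto simp: AP_iff)
    have sv: "set v = S - {m} - U" "distinct v" "length v \<le> 1 \<or> andre v" using v by (auto simp: AP_iff)
    have gu: "\<forall>y\<in>set u. m < y" using su U mlt by auto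
    have gv: "\<forall>y\<in>set v. m < y" using sv mlt by auto
    have dist: "distinct (u @ m # v)" using su sv U by auto
    have Mv: "M \<in> set v" using sv U MS mM by auto
    have Maxv: "Max (set v) = M" using Mv sv Mge fin by (intro Max_eqI) auto
    have Maxu: "u \<noteq> [] \<Longrightarrow> Max (set u) < M"
    proof -
      assume "u \<noteq> []"
      then have "Max (set u) \<in> U" using su by (metis Max_in finite_set set_empty)
      then have "Max (set u) \<le> M" "Max (set u) \<noteq> M" using U Mge by auto
      then show ?thesis by simp
    qed
    have "v \<noteq> []" using Mv by auto
    moreover have "u \<noteq> [] \<longrightarrow> Max (set u) < Max (set v)" using Maxu Maxv by simp
    moreover have "2 \<le> length u \<longrightarrow> andre u" using su(3) by linarith
    moreover have "2 \<le> length v \<longrightarrow> andre v" using sv(3) by linarith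
    ultimately have "andre (u @ m # v)"
      by (subst andre_split[OF gu gv dist]) blast
    moreover have "set p = S" using p su sv U mS by auto
    ultimately show "p \<in> AP S" using p dist by (auto simp: AP_iff)
  qed
qed

lemma sum_prod_times:
  "(\<Sum>w\<in>X \<times> Y. f (fst w) * g (snd w)) = sum f X * (sum g Y :: 'a :: comm_semiring_1)"
proof -
  have "(\<Sum>w\<in>X \<times> Y. f (fst w) * g (snd w)) = (\<Sum>(a,b)\<in>X \<times> Y. f a * g b)"
    by (simp add: case_prod_unfold)
  also have "\<dots> = (\<Sum>a\<in>X. \<Sum>b\<in>Y. f a * g b)" by (rule sum.cartesian_product[symmetric])
  also have "\<dots> = sum f X * sum g Y" by (rule sum_product[symmetric])
  finally show ?thesis .
qed

lemma sum_prod_times2: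
  "(\<Sum>w\<in>X \<times> Y. c * (f (fst w) * g (snd w))) = c * (sum f X * (sum g Y :: 'a :: comm_semiring_1))"
  by (simp add: sum_distrib_left[symmetric] sum_prod_times)

lemma A_decomp:
  assumes fin: "finite S" and card: "card S \<ge> 2"
  shows "A S = (\<Sum>U\<in>Pow (S - {Min S, Max S}).
            (if U = {} then 1 else monom 1 1) * A U * A (S - {Min S} - U))"
proof -
  define m where "m = Min S"
  define M where "M = Max S"
  have ne: "S \<noteq> {}" using card by auto
  have mS: "m \<in> S" using fin ne by (auto simp: m_def)
  have mlt: "\<And>y. y \<in> S \<Longrightarrow> y \<noteq> m \<Longrightarrow> m < y"
  proof -
    fix y assume "y \<in> S" "y \<noteq> m"
    moreover have "m \<le> y" using fin \<open>y \<in> S\<close> unfolding m_def by simp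
    ultimately show "m < y" by (simp add: le_neq_trans)
  qed
  let ?f = "\<lambda>(u, v). u @ m # v"
  let ?B = "\<lambda>U. ?f ` (AP U \<times> AP (S - {m} - U))"
  have dec: "AP S = (\<Union>U\<in>Pow (S - {m, M}). ?B U)"
    unfolding m_def M_def by (rule AP_decomp[OF fin card])
  have mnot: "\<And>U w. U \<subseteq> S - {m, M} \<Longrightarrow> w \<in> AP U \<times> AP (S - {m} - U) \<Longrightarrow>
      m \<notin> set (fst w) \<and> m \<notin> set (snd w) \<and> set (fst w) = U"
    by (auto simp: AP_iff)
  have inj: "inj_on ?f (AP U \<times> AP (S - {m} - U))" if U: "U \<subseteq> S - {m, M}" for U
  proof (rule inj_onI)
    fix w w' assume w: "w \<in> AP U \<times> AP (S - {m} - U)" and w': "w' \<in> AP U \<times> AP (S - {m} - U)"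
      and eq: "?f w = ?f w'"
    obtain u v where wuv: "w = (u, v)" by (cases w)
    obtain u' v' where wuv': "w' = (u', v')" by (cases w')
    have "m \<notin> set u" "m \<notin> set v" using mnot[OF U w] wuv by auto
    moreover have "u @ m # v = u' @ m # v'" using eq wuv wuv' by simp
    ultimately show "w = w'" using wuv wuv' by (simp add: append_Cons_eq_iff)
  qed
  have disj: "?B U \<inter> ?B U' = {}" if U: "U \<in> Pow (S - {m, M})" and U': "U' \<in> Pow (S - {m, M})"
    and ne: "U \<noteq> U'" for U U'
  proof (rule ccontr)
    assume "?B U \<inter> ?B U' \<noteq> {}"
    then obtain w w' where w: "w \<in> AP U \<times> AP (S - {m} - U)" and w': "w' \<in> AP U' \<times> AP (S - {m} - U')"
      and eq: "?f w = ?f w'" by blast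
    obtain u v where wuv: "w = (u, v)" by (cases w)
    obtain u' v' where wuv': "w' = (u', v')" by (cases w')
    have "m \<notin> set u" "m \<notin> set v" "set u = U" using mnot[OF _ w] U wuv by auto
    moreover have "set u' = U'" using mnot[OF _ w'] U' wuv' by auto
    moreover have "u @ m # v = u' @ m # v'" using eq wuv wuv' by simp
    ultimately show False using ne by (simp add: append_Cons_eq_iff)
  qed
  have "A S = (\<Sum>p\<in>(\<Union>U\<in>Pow (S - {m, M}). ?B U). monom 1 (des p))"
    unfolding A_def dec ..
  also have "\<dots> = (\<Sum>U\<in>Pow (S - {m, M}). \<Sum>p\<in>?B U. monom 1 (des p))"
    by (rule sum.UNION_disjoint) (use fin disj in auto)
  also have "\<dots> = (\<Sum>U\<in>Pow (S - {m, M}). (if U = {} then 1 else monom 1 1) * A U * A (S - {m} - U))"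
  proof (rule sum.cong[OF refl])
    fix U assume U: "U \<in> Pow (S - {m, M})"
    have "(\<Sum>p\<in>?B U. monom 1 (des p)) = (\<Sum>w\<in>AP U \<times> AP (S - {m} - U). monom 1 (des (?f w)))"
      by (subst sum.reindex[OF inj]) (use U in auto)
    also have "\<dots> = (\<Sum>w\<in>AP U \<times> AP (S - {m} - U). (if U = {} then 1 else monom 1 1) * (monom 1 (des (fst w)) * monom 1 (des (snd w))))"
    proof (rule sum.cong[OF refl])
      fix w assume w: "w \<in> AP U \<times> AP (S - {m} - U)"
      obtain u v where wuv: "w = (u, v)" by (cases w)
      have su: "set u = U" "set v = S - {m} - U" using w wuv by (auto simp: AP_iff)
      have gu: "\<forall>y\<in>set u. m < y" using su U mlt by auto
      have gv: "\<forall>y\<in>set v. m < y" using su mlt by auto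
      have "des (u @ m # v) = des u + des v + (if u = [] then 0 else 1)" by (rule des_split[OF gu gv])
      moreover have "(u = []) = (U = {})" using su by auto
      ultimately show "monom 1 (des (?f w)) = (if U = {} then 1 else monom 1 1) * (monom 1 (des (fst w)) * monom 1 (des (snd w)))"
        using wuv by (auto simp: mult_monom add.commute)
    qed
    also have "\<dots> = (if U = {} then 1 else monom 1 1) * ((\<Sum>u\<in>AP U. monom 1 (des u)) * (\<Sum>v\<in>AP (S - {m} - U). monom 1 (des v)))"
      by (rule sum_prod_times2)
    finally show "(\<Sum>p\<in>?B U. monom 1 (des p)) = (if U = {} then 1 else monom 1 1) * A U * A (S - {m} - U)"
      by (simp add: A_def mult.assoc)
  qed
  finally show ?thesis unfolding m_def M_def .
qed

lemma sum_Pow_card: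
  assumes "finite TT"
  shows "(\<Sum>U\<in>Pow TT. h (card U)) = (\<Sum>a=0..card TT. of_nat (card TT choose a) * (h a :: 'a :: comm_semiring_1))"
proof -
  have P: "Pow TT = (\<Union>a\<in>{0..card TT}. {U. U \<subseteq> TT \<and> card U = a})"
    using assms by (auto intro: card_mono)
  have "(\<Sum>U\<in>Pow TT. h (card U)) = (\<Sum>a\<in>{0..card TT}. \<Sum>U\<in>{U. U \<subseteq> TT \<and> card U = a}. h (card U))"
    unfolding P by (rule sum.UNION_disjoint) (use assms in auto)
  also have "\<dots> = (\<Sum>a=0..card TT. of_nat (card TT choose a) * h a)"
  proof (rule sum.cong[OF refl])
    fix a
    have "(\<Sum>U\<in>{U. U \<subseteq> TT \<and> card U = a}. h (card U)) = (\<Sum>U\<in>{U. U \<subseteq> TT \<and> card U = a}. h a)"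
      by (rule sum.cong) auto
    also have "\<dots> = of_nat (card {U. U \<subseteq> TT \<and> card U = a}) * h a" by simp
    also have "card {U. U \<subseteq> TT \<and> card U = a} = card TT choose a" by (rule n_subsets[OF assms])
    finally show "(\<Sum>U\<in>{U. U \<subseteq> TT \<and> card U = a}. h (card U)) = of_nat (card TT choose a) * h a" .
  qed
  finally show ?thesis .
qed

lemma A_small:
  assumes "finite S" "card S \<le> 1"
  shows "A S = 1"
proof (cases "card S = 0")
  case True
  then have "S = {}" using assms by simp
  moreover have "AP {} = {[]}" by (auto simp: AP_def)
  ultimately show ?thesis by (simp add: A_def des_def)
next
  case False
  then have "card S = 1" using assms by linarith
  then obtain x where "S = {x}" by (metis card_1_singletonE)
  then have "AP S = {[x]}" by (auto simp: AP_def)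
  then show ?thesis by (simp add: A_def des_def)
qed

definition G :: "nat \<Rightarrow> real poly" where
  "G n = (\<Sum>a=0..n - 2. of_nat (n - 2 choose a) * ((if a = 0 then 1 else monom 1 1) * A {1..a} * A {1..n - 1 - a}))"

lemma A_rec_gen:
  assumes fin: "finite S" and card: "card S \<ge> 2"
    and IH: "\<And>S'. finite S' \<Longrightarrow> card S' < card S \<Longrightarrow> A S' = A {1..card S'}"
  shows "A S = G (card S)"
proof -
  define m where "m = Min S"
  define M where "M = Max S"
  have ne: "S \<noteq> {}" using card by auto
  have mS: "m \<in> S" and MS: "M \<in> S" using fin ne by (auto simp: m_def M_def)
  have mM: "m \<noteq> M"
  proof
    assume "m = M"
    have "\<not> card S \<le> Suc 0" using card by simp
    then obtain x y where "x \<in> S" "y \<in> S" "x \<noteq> y" using card_le_Suc0_iff_eq[OF fin] by blast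
    moreover have "m \<le> x" "m \<le> y" "x \<le> M" "y \<le> M" using fin \<open>x \<in> S\<close> \<open>y \<in> S\<close>
      by (auto simp: m_def M_def)
    ultimately have "x = m" "y = m" using \<open>m = M\<close> by auto
    then show False using \<open>x \<noteq> y\<close> by simp
  qed
  let ?TT = "S - {m, M}"
  have cT: "card ?TT = card S - 2" using mS MS mM fin by (simp add: card_Diff_subset)
  have h: "(if U = {} then 1 else monom 1 1) * A U * A (S - {m} - U) =
      (if card U = 0 then 1 else monom 1 1) * A {1..card U} * A {1..card S - 1 - card U}"
    if U: "U \<in> Pow ?TT" for U
  proof -
    have finU: "finite U" using U fin finite_subset by auto
    have cU: "card U < card S" using U fin mS by (intro psubset_card_mono) auto
    have sub: "U \<subseteq> S - {m}" using U by auto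
    have cV: "card (S - {m} - U) = card S - 1 - card U"
      using sub fin mS finU by (simp add: card_Diff_subset)
    have cV': "card (S - {m} - U) < card S" using cV cU card by simp
    have "A U = A {1..card U}" by (rule IH[OF finU cU])
    moreover have "A (S - {m} - U) = A {1..card (S - {m} - U)}" by (rule IH) (use fin cV' in auto)
    moreover have "(U = {}) = (card U = 0)" using finU by simp
    ultimately show ?thesis using cV by simp
  qed
  have "A S = (\<Sum>U\<in>Pow ?TT. (if U = {} then 1 else monom 1 1) * A U * A (S - {m} - U))"
    unfolding m_def M_def by (rule A_decomp[OF fin card])
  also have "\<dots> = (\<Sum>U\<in>Pow ?TT. (if card U = 0 then 1 else monom 1 1) * A {1..card U} * A {1..card S - 1 - card U})"
    by (rule sum.cong[OF refl]) (rule h)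
  also have "\<dots> = (\<Sum>a=0..card ?TT. of_nat (card ?TT choose a) * ((if a = 0 then 1 else monom 1 1) * A {1..a} * A {1..card S - 1 - a}))"
    by (rule sum_Pow_card[where h="\<lambda>a. (if a = 0 then 1 else monom 1 1) * A {1..a} * A {1..card S - 1 - a}"]) (use fin in auto)
  also have "\<dots> = G (card S)" unfolding G_def cT ..
  finally show ?thesis .
qed

lemma A_card: "finite S \<Longrightarrow> A S = A {1..card S}"
proof (induction "card S" arbitrary: S rule: less_induct)
  case less
  show ?case
  proof (cases "card S \<le> 1")
    case True
    then show ?thesis using less A_small[of S] A_small[of "{1..card S}"] by simp
  next
    case False
    then have c2: "card S \<ge> 2" by simp
    have "A S = G (card S)"
    proof (rule A_rec_gen[OF less(2) c2])
      fix S' :: "nat set" assume "finite S'" "card S' < card S"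
      then show "A S' = A {1..card S'}" using less(1) by blast
    qed
    moreover have "A {1..card S} = G (card {1..card S})"
    proof (rule A_rec_gen)
      fix S' :: "nat set" assume "finite S'" "card S' < card {1..card S}"
      then have "card S' < card S" by simp
      then show "A S' = A {1..card S'}" using less(1) \<open>finite S'\<close> by blast
    qed (use c2 in simp_all)
    ultimately show ?thesis by simp
  qed
qed

definition Ap :: "nat \<Rightarrow> real poly" where "Ap n = A {1..n}"

lemma Ap_0: "Ap 0 = 1" and Ap_1: "Ap 1 = 1"
  by (auto simp: Ap_def intro: A_small)

lemma Ap_rec: "n \<ge> 2 \<Longrightarrow> Ap n = (\<Sum>a=0..n - 2. of_nat (n - 2 choose a) * ((if a = 0 then 1 else monom 1 1) * Ap a * Ap (n - 1 - a)))"
proof -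
  assume n: "n \<ge> 2"
  have "Ap n = G (card {1..n})" unfolding Ap_def
  proof (rule A_rec_gen)
    fix S' :: "nat set" assume "finite S'" "card S' < card {1..n}"
    then show "A S' = A {1..card S'}" using A_card by blast
  qed (use n in simp_all)
  then show ?thesis by (simp add: G_def Ap_def)
qed

definition XX :: "real poly" where "XX = monom 1 1"

definition Lop :: "nat \<Rightarrow> real poly \<Rightarrow> real poly" where
  "Lop k f = f + (of_nat k - 1) * XX * f + (XX - 2 * XX ^ 2) * pderiv f"

lemma pderiv_XX[simp]: "pderiv XX = 1"
  by (simp add: pderiv_monom XX_def)

lemma pderiv_sum': "pderiv (sum f I) = (\<Sum>a\<in>I. pderiv (f a))"
  by (induction I rule: infinite_finite_induct) (auto simp: pderiv_add)

lemma Lop_prod: "Lop (a + b + 1) (XX * f * g) = XX * (Lop a f * g + f * Lop b g)"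
  unfolding Lop_def by (simp add: pderiv_mult algebra_simps power2_eq_square)

lemma Lop_shift: "Lop (Suc k) g = Lop k g + XX * g"
  unfolding Lop_def by (simp add: algebra_simps)

lemma Lop_add: "Lop k (f + g) = Lop k f + Lop k g"
  unfolding Lop_def by (simp add: pderiv_add algebra_simps)

lemma Lop_0: "Lop k 0 = 0"
  unfolding Lop_def by simp

lemma Lop_cmult: "Lop k (of_nat c * f) = of_nat c * Lop k f"
  unfolding Lop_def by (simp add: pderiv_mult algebra_simps)

lemma Lop_sum: "Lop k (\<Sum>a\<in>I. of_nat (c a) * f a) = (\<Sum>a\<in>I. of_nat (c a) * Lop k (f a))"
  by (induction I rule: infinite_finite_induct) (auto simp: Lop_0 Lop_add Lop_cmult)

lemma Ap_1'[simp]: "Ap (Suc 0) = 1" using Ap_1 by simp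

lemma Ap_recN: "Ap (N + 2) = (\<Sum>a=0..N. of_nat (N choose a) * ((if a = 0 then 1 else XX) * Ap a * Ap (N + 1 - a)))"
proof -
  have "Ap (N + 2) = (\<Sum>a=0..N + 2 - 2. of_nat (N + 2 - 2 choose a) * ((if a = 0 then 1 else monom 1 1) * Ap a * Ap (N + 2 - 1 - a)))"
    by (rule Ap_rec) simp
  also have "\<dots> = (\<Sum>a=0..N. of_nat (N choose a) * ((if a = 0 then 1 else XX) * Ap a * Ap (N + 1 - a)))"
    by (simp only: XX_def) simp
  finally show ?thesis .
qed

lemma Ap_lin: "n \<ge> 1 \<Longrightarrow> Ap (Suc n) = Lop n (Ap n)"
proof (induction n rule: less_induct)
  case (less n)
  show ?case
  proof (cases "n = 1")
    case True
    have "Ap (Suc 1) = 1" using Ap_recN[of 0] by (simp add: Ap_0 Ap_1)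
    moreover have "Lop 1 (Ap 1) = 1" by (simp add: Lop_def Ap_1)
    ultimately show ?thesis using True by simp
  next
    case False
    then obtain N where nN: "n = N + 2" using less(2) by (metis add_2_eq_Suc' le_Suc_ex le_antisym not_less_eq_eq one_add_one plus_1_eq_Suc)
    define t where "t a = (if a = 0 then 1 else XX) * Ap a * Ap (N + 1 - a)" for a
    define S1 where "S1 = (\<Sum>a=0..N. of_nat (N choose a) * (Ap (Suc a) * Ap (N + 1 - a)))"
    define S2 where "S2 = (\<Sum>a=0..N. of_nat (N choose a) * (Ap a * Ap (N + 2 - a)))"
    define S3 where "S3 = (\<Sum>a=0..N. of_nat (N choose Suc a) * (Ap (Suc a) * Ap (N + 1 - a)))"
    have IH: "\<And>k. 1 \<le> k \<Longrightarrow> k < n \<Longrightarrow> Ap (Suc k) = Lop k (Ap k)" using less(1) by blast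
    have Lt: "Lop n (t a) = XX * (Ap (Suc a) * Ap (N + 1 - a) + Ap a * Ap (N + 2 - a)) + (if a = 0 then Ap (N + 2) - XX * Ap (N + 2) else 0)"
      if a: "a \<in> {0..N}" for a
    proof (cases "a = 0")
      case True
      have "Lop n (t a) = Lop (Suc (N + 1)) (Ap (N + 1))" using True nN by (simp add: t_def Ap_0)
      also have "\<dots> = Lop (N + 1) (Ap (N + 1)) + XX * Ap (N + 1)" by (rule Lop_shift)
      also have "Lop (N + 1) (Ap (N + 1)) = Ap (N + 2)" using IH[of "N + 1"] nN by simp
      finally show ?thesis using True by (simp add: Ap_0 Ap_1 algebra_simps)
    next
      case False
      have n2: "n = a + (N + 1 - a) + 1" using a nN by auto
      have "Lop n (t a) = Lop (a + (N + 1 - a) + 1) (XX * Ap a * Ap (N + 1 - a))"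
        using False n2 by (simp add: t_def)
      also have "\<dots> = XX * (Lop a (Ap a) * Ap (N + 1 - a) + Ap a * Lop (N + 1 - a) (Ap (N + 1 - a)))"
        by (rule Lop_prod)
      also have "Lop a (Ap a) = Ap (Suc a)" using IH[of a] False a nN by simp
      also have "Lop (N + 1 - a) (Ap (N + 1 - a)) = Ap (Suc (N + 1 - a))" using IH[of "N + 1 - a"] a nN by simp
      also have "Suc (N + 1 - a) = N + 2 - a" using a by auto
      finally show ?thesis using False by simp
    qed
    have "Lop n (Ap n) = Lop n (\<Sum>a=0..N. of_nat (N choose a) * t a)"
      using Ap_recN[of N] nN by (simp add: t_def)
    also have "\<dots> = (\<Sum>a=0..N. of_nat (N choose a) * Lop n (t a))" by (rule Lop_sum)
    also have "\<dots> = (\<Sum>a=0..N. of_nat (N choose a) * (XX * (Ap (Suc a) * Ap (N + 1 - a) + Ap a * Ap (N + 2 - a)))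
        + of_nat (N choose a) * (if a = 0 then Ap (N + 2) - XX * Ap (N + 2) else 0))"
      by (rule sum.cong[OF refl]) (simp add: Lt algebra_simps)
    also have "\<dots> = (\<Sum>a=0..N. of_nat (N choose a) * (XX * (Ap (Suc a) * Ap (N + 1 - a) + Ap a * Ap (N + 2 - a))))
        + (\<Sum>a=0..N. of_nat (N choose a) * (if a = 0 then Ap (N + 2) - XX * Ap (N + 2) else 0))"
      by (rule sum.distrib)
    also have "(\<Sum>a=0..N. of_nat (N choose a) * (if a = 0 then Ap (N + 2) - XX * Ap (N + 2) else 0))
        = (\<Sum>a=0..N. if a = 0 then Ap (N + 2) - XX * Ap (N + 2) else 0)"
      by (rule sum.cong) auto
    also have "\<dots> = Ap (N + 2) - XX * Ap (N + 2)" by (simp add: sum.delta)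
    also have "(\<Sum>a=0..N. of_nat (N choose a) * (XX * (Ap (Suc a) * Ap (N + 1 - a) + Ap a * Ap (N + 2 - a))))
        = XX * (S1 + S2)"
      by (simp add: sum.distrib S1_def S2_def sum_distrib_left algebra_simps)
    finally have L: "Lop n (Ap n) = XX * (S1 + S2) + (Ap (N + 2) - XX * Ap (N + 2))" .
    have S2': "S2 = Ap (N + 2) + S3"
    proof -
      have "S2 = (\<Sum>a=0..Suc N. of_nat (N choose a) * (Ap a * Ap (N + 2 - a)))"
        unfolding S2_def by simp
      also have "\<dots> = Ap (N + 2) + S3"
        by (subst sum.atLeast0_atMost_Suc_shift) (simp add: S3_def Ap_0)
      finally show ?thesis .
    qed
    have "Ap (Suc n) = Ap (Suc N + 2)" using nN by simp
    also have "\<dots> = (\<Sum>a=0..Suc N. of_nat (Suc N choose a) * ((if a = 0 then 1 else XX) * Ap a * Ap (Suc N + 1 - a)))"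
      by (rule Ap_recN)
    also have "\<dots> = Ap (N + 2) + (\<Sum>a=0..N. of_nat (Suc N choose Suc a) * (XX * Ap (Suc a) * Ap (N + 1 - a)))"
      by (subst sum.atLeast0_atMost_Suc_shift) (simp add: Ap_0)
    also have "(\<Sum>a=0..N. of_nat (Suc N choose Suc a) * (XX * Ap (Suc a) * Ap (N + 1 - a))) = XX * (S1 + S3)"
      by (simp add: S1_def S3_def sum_distrib_left sum.distrib algebra_simps)
    finally show ?thesis using L S2' by (simp add: algebra_simps)
  qed
qed

lemma AP_perms: "n \<ge> 2 \<Longrightarrow> AP {1..n} = {p \<in> perms n. andre p}"
proof (rule set_eqI)
  fix p assume n: "n \<ge> 2"
  have "p \<in> AP {1..n} \<longleftrightarrow> p \<in> perms n \<and> (length p \<le> 1 \<or> andre p)"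
    by (simp add: AP_def perms_def)
  also have "\<dots> \<longleftrightarrow> p \<in> perms n \<and> andre p" using perms_length[of p n] n by auto
  finally show "p \<in> AP {1..n} \<longleftrightarrow> p \<in> {p \<in> perms n. andre p}" by simp
qed

lemma d_coeff: "n \<ge> 2 \<Longrightarrow> real (d n i) = coeff (Ap n) i"
proof -
  assume n: "n \<ge> 2"
  have "coeff (Ap n) i = (\<Sum>p\<in>{p \<in> perms n. andre p}. coeff (monom 1 (des p)) i)"
    unfolding Ap_def A_def AP_perms[OF n] by (simp add: coeff_sum)
  also have "\<dots> = (\<Sum>p\<in>{p \<in> perms n. andre p}. if des p = i then 1 else 0)"
    by (rule sum.cong) (auto simp: coeff_monom)
  also have "\<dots> = real (card {p \<in> {p \<in> perms n. andre p}. des p = i})"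
    by (simp add: sum.If_cases Int_def)
  also have "{p \<in> {p \<in> perms n. andre p}. des p = i} = {p \<in> perms n. andre p \<and> des p = i}" by auto
  finally show ?thesis by (simp add: d_def)
qed

lemma coeff_mult_monom': "coeff (p * monom c n) k = (if k < n then 0 else c * coeff p (k - n))"
  by (simp add: mult.commute[of p] coeff_monom_mult)

lemma coeff_Lop: "coeff (Lop k f) i =
   coeff f i + (if i = 0 then 0 else (of_nat k - 1) * coeff f (i - 1) + of_nat i * coeff f i
      - 2 * of_nat (i - 1) * coeff f (i - 1))"
proof -
  have XX2: "XX ^ 2 = monom 1 2" unfolding XX_def power2_eq_square mult_monom by (simp only: one_add_one mult_1)
  have "Lop k f = f + smult (of_nat k - 1) (monom 1 1 * f) + monom 1 1 * pderiv f - smult 2 (monom 1 2 * pderiv f)"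
    unfolding Lop_def XX2 by (simp add: XX_def of_nat_poly algebra_simps numeral_poly smult_diff_left)
  note L = this
  show ?thesis unfolding L
    by (cases i) (simp_all add: coeff_monom_mult coeff_mult_monom' coeff_pderiv coeff_diff coeff_smult numeral_2_eq_2 algebra_simps)
qed

lemma Ap_2: "Ap 2 = 1"
  using Ap_recN[of 0] by (simp add: Ap_0 numeral_2_eq_2)

lemma d_2: "real (d 2 i) = (if i = 0 then 1 else 0)"
  using d_coeff[of 2 i] by (simp add: Ap_2)

lemma d_rec0: "n \<ge> 2 \<Longrightarrow> real (d (Suc n) 0) = real (d n 0)"
  using d_coeff[of n 0] d_coeff[of "Suc n" 0] Ap_lin[of n] coeff_Lop[of n "Ap n" 0] by simp

lemma d_recS: "n \<ge> 2 \<Longrightarrow> real (d (Suc n) (Suc j)) = (real j + 2) * real (d n (Suc j)) + (real n - 1 - 2 * real j) * real (d n j)"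
  using d_coeff[of n j] d_coeff[of n "Suc j"] d_coeff[of "Suc n" "Suc j"] Ap_lin[of n] coeff_Lop[of n "Ap n" "Suc j"]
  by (simp add: algebra_simps)

lemma d_vanish: "n \<ge> 2 \<Longrightarrow> n \<le> 2 * i \<Longrightarrow> d n i = 0"
proof (induction n arbitrary: i rule: dec_induct)
  case base
  then show ?case using d_2[of i] by simp
next
  case (step n)
  from step.prems obtain j where j: "i = Suc j" by (cases i) auto
  have z1: "d n (Suc j) = 0" using step.IH[of "Suc j"] step.prems j by simp
  have "real (d (Suc n) (Suc j)) = (real n - 1 - 2 * real j) * real (d n j)"
    using d_recS[OF step.hyps(1), of j] z1 by simp
  also have "\<dots> = 0"
  proof (cases "n \<le> 2 * j")
    case True then show ?thesis using step.IH[of j] by simp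
  next
    case False
    then have "n = 2 * j + 1" using step.prems j by simp
    then show ?thesis by simp
  qed
  finally show ?case using j by simp
qed

definition Rp :: "nat \<Rightarrow> real poly" where
  "Rp n = (\<Sum>p\<in>perms n. monom 1 (run p))"

definition Op :: "nat \<Rightarrow> real poly \<Rightarrow> real poly" where
  "Op k f = (XX - XX ^ 3) * pderiv f + (2 * XX + (of_nat k - 1) * XX ^ 2) * f"

lemma poly_XX[simp]: "poly XX x = x" by (simp add: XX_def poly_monom)

lemma poly_Rp: "poly (Rp n) x = R n x"
  by (simp add: Rp_def R_def poly_sum poly_monom)

lemma poly_pderiv_Rp: "poly (pderiv (Rp n)) x = Rd n x"
  by (simp add: Rp_def Rd_def pderiv_sum' poly_sum pderiv_monom poly_monom)

lemma Rp_Suc: "n \<ge> 2 \<Longrightarrow> Rp (Suc n) = Op n (Rp n)"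
proof -
  assume n: "n \<ge> 2"
  have "poly (Rp (Suc n)) = poly (Op n (Rp n))"
  proof
    fix x
    show "poly (Rp (Suc n)) x = poly (Op n (Rp n)) x"
      unfolding poly_Rp R_Suc[OF n] Op_def
      by (simp add: poly_pderiv_Rp poly_Rp algebra_simps power2_eq_square power3_eq_cube)
  qed
  then show ?thesis by (simp add: poly_eq_poly_eq_iff)
qed

lemma smult_of_nat': "smult (of_nat m) p = of_nat m * (p :: real poly)"
  by (simp add: of_nat_poly)

lemma pderiv_XXpow: "pderiv (XX ^ (i + 1)) = of_nat (i + 1) * XX ^ i"
  by (simp only: Suc_eq_plus1[symmetric]) (subst pderiv_power_Suc, simp only: smult_of_nat' pderiv_XX mult_1_right)

lemma pderiv_1XXpow: "pderiv ((1 + XX) ^ Suc k) = of_nat (Suc k) * (1 + XX) ^ k"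
  by (subst pderiv_power_Suc) (simp only: smult_of_nat' pderiv_add pderiv_1 pderiv_XX add_0 mult_1_right)

lemma Op_mon: "Op (i + 2 + k) (XX ^ (i + 1) * (1 + XX) ^ k) =
   of_nat (i + 1) * XX ^ (i + 1) * (1 + XX) ^ (k + 1) + (of_nat k + 1 - of_nat i) * XX ^ (i + 2) * (1 + XX) ^ k"
proof (cases k)
  case 0
  show ?thesis
    unfolding Op_def 0 by (simp only: pderiv_mult pderiv_XXpow power_0 pderiv_1 mult_1_right mult_0_right add_0_right)
      (simp add: algebra_simps power2_eq_square power3_eq_cube)
next
  case (Suc k')
  show ?thesis unfolding Op_def Suc
    by (simp only: pderiv_mult pderiv_XXpow pderiv_1XXpow)
      (simp add: algebra_simps power2_eq_square power3_eq_cube)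
qed

lemma Op_mon': "Op (i + 2 + k) (XX ^ (i + 1) * (1 + XX) ^ k) =
   smult (real i + 1) (XX ^ (i + 1) * (1 + XX) ^ (k + 1)) + smult (real k + 1 - real i) (XX ^ (i + 2) * (1 + XX) ^ k)"
  unfolding Op_mon by (simp add: smult_diff_left smult_add_left smult_of_nat' algebra_simps)

lemma Op_add: "Op k (f + g) = Op k f + Op k g"
  unfolding Op_def by (simp add: pderiv_add algebra_simps)

lemma Op_0: "Op k 0 = 0" unfolding Op_def by simp

lemma Op_smult: "Op k (smult c f) = smult c (Op k f)"
  unfolding Op_def by (simp only: pderiv_smult mult_smult_right smult_add_right)

lemma Op_sum: "Op k (\<Sum>a\<in>I. smult (c a) (f a)) = (\<Sum>a\<in>I. smult (c a) (Op k (f a)))"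
  by (induction I rule: infinite_finite_induct) (auto simp: Op_0 Op_add Op_smult)

definition Qp :: "nat \<Rightarrow> real poly" where
  "Qp n = (\<Sum>i=0..n - 2. smult (2 * real (d n i)) (XX ^ (i + 1) * (1 + XX) ^ (n - 2 - i)))"

lemma Qp_Suc:
  assumes n: "n \<ge> 2"
  shows "Qp (Suc n) = Op n (Qp n)"
proof -
  define F1 where "F1 i = smult (2 * (real i + 1) * real (d n i)) (XX ^ (i + 1) * (1 + XX) ^ (n - 1 - i))" for i
  define F2 where "F2 i = smult (2 * (real n - 1 - 2 * real i) * real (d n i)) (XX ^ (i + 2) * (1 + XX) ^ (n - 2 - i))" for i
  have "Op n (Qp n) = (\<Sum>i=0..n - 2. smult (2 * real (d n i)) (Op n (XX ^ (i + 1) * (1 + XX) ^ (n - 2 - i))))"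
    unfolding Qp_def by (rule Op_sum)
  also have "\<dots> = (\<Sum>i=0..n - 2. F1 i + F2 i)"
  proof (rule sum.cong[OF refl])
    fix i assume i: "i \<in> {0..n - 2}"
    then have ni: "n = i + 2 + (n - 2 - i)" using n by auto
    have e1: "n - 2 - i + 1 = n - 1 - i" using i n by auto
    have e2: "real (n - 2 - i) + 1 - real i = real n - 1 - 2 * real i" using i n by (simp add: of_nat_diff)
    have "Op n (XX ^ (i + 1) * (1 + XX) ^ (n - 2 - i)) = Op (i + 2 + (n - 2 - i)) (XX ^ (i + 1) * (1 + XX) ^ (n - 2 - i))"
      by (simp only: ni[symmetric])
    also have "\<dots> = smult (real i + 1) (XX ^ (i + 1) * (1 + XX) ^ (n - 1 - i)) + smult (real n - 1 - 2 * real i) (XX ^ (i + 2) * (1 + XX) ^ (n - 2 - i))"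
      unfolding Op_mon' e1 e2 ..
    finally show "smult (2 * real (d n i)) (Op n (XX ^ (i + 1) * (1 + XX) ^ (n - 2 - i))) = F1 i + F2 i"
      unfolding F1_def F2_def by (simp only: smult_add_right smult_smult mult_ac)
  qed
  also have "\<dots> = (\<Sum>i=0..n - 2. F1 i) + (\<Sum>i=0..n - 2. F2 i)" by (rule sum.distrib)
  finally have L: "Op n (Qp n) = (\<Sum>i=0..n - 2. F1 i) + (\<Sum>i=0..n - 2. F2 i)" .
  have F1last: "F1 (n - 1) = 0"
  proof -
    have "d n (n - 1) = 0" using n by (intro d_vanish) auto
    then show ?thesis by (simp add: F1_def)
  qed
  have nn: "Suc n - 2 = Suc (n - 2)" using n by simp
  have "Qp (Suc n) = (\<Sum>i=0..Suc (n - 2). smult (2 * real (d (Suc n) i)) (XX ^ (i + 1) * (1 + XX) ^ (Suc n - 2 - i)))"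
    unfolding Qp_def nn ..
  also have "\<dots> = smult (2 * real (d (Suc n) 0)) (XX ^ 1 * (1 + XX) ^ (Suc n - 2))
      + (\<Sum>j=0..n - 2. smult (2 * real (d (Suc n) (Suc j))) (XX ^ (Suc j + 1) * (1 + XX) ^ (Suc n - 2 - Suc j)))"
    by (subst sum.atLeast0_atMost_Suc_shift) simp
  also have "smult (2 * real (d (Suc n) 0)) (XX ^ 1 * (1 + XX) ^ (Suc n - 2)) = F1 0"
    unfolding F1_def d_rec0[OF n] using n by (simp add: numeral_2_eq_2)
  also have "(\<Sum>j=0..n - 2. smult (2 * real (d (Suc n) (Suc j))) (XX ^ (Suc j + 1) * (1 + XX) ^ (Suc n - 2 - Suc j)))
      = (\<Sum>j=0..n - 2. F1 (Suc j) + F2 j)"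
  proof (rule sum.cong[OF refl])
    fix j assume j: "j \<in> {0..n - 2}"
    have e1: "Suc n - 2 - Suc j = n - 2 - j" by simp
    have e2: "n - 1 - Suc j = n - 2 - j" by simp
    have e3: "Suc j + 1 = j + 2" by simp
    show "smult (2 * real (d (Suc n) (Suc j))) (XX ^ (Suc j + 1) * (1 + XX) ^ (Suc n - 2 - Suc j)) = F1 (Suc j) + F2 j"
      unfolding F1_def F2_def e1 e2 e3 d_recS[OF n]
      by (simp add: smult_add_left[symmetric] algebra_simps)
  qed
  also have "\<dots> = (\<Sum>j=0..n - 2. F1 (Suc j)) + (\<Sum>j=0..n - 2. F2 j)" by (rule sum.distrib)
  finally have Q: "Qp (Suc n) = F1 0 + ((\<Sum>j=0..n - 2. F1 (Suc j)) + (\<Sum>j=0..n - 2. F2 j))" .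
  have "F1 0 + (\<Sum>j=0..n - 2. F1 (Suc j)) = (\<Sum>i=0..Suc (n - 2). F1 i)"
    by (subst sum.atLeast0_atMost_Suc_shift) (simp add: comp_def)
  also have "\<dots> = (\<Sum>i=0..n - 2. F1 i) + F1 (Suc (n - 2))" by simp
  also have "Suc (n - 2) = n - 1" using n by simp
  finally have "F1 0 + (\<Sum>j=0..n - 2. F1 (Suc j)) = (\<Sum>i=0..n - 2. F1 i)" using F1last by simp
  then show ?thesis using Q L by (simp add: add.assoc[symmetric])
qed

lemma Rp_2: "Rp 2 = Qp 2"
proof -
  have run1: "run p = 1" if "p \<in> perms 2" for p
  proof -
    have "length p = 2" using perms_length[OF that] .
    then show ?thesis unfolding run_cnt3 by (simp add: cnt3_short)
  qed
  have "card (perms 2) = 2" by (simp add: perms_def card_permutations_of_set)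
  then have "Rp 2 = smult 2 XX"
    unfolding Rp_def using run1 by (simp add: XX_def smult_of_nat' numeral_poly)
  moreover have "Qp 2 = smult 2 XX" unfolding Qp_def using d_2[of 0] by simp
  ultimately show ?thesis by simp
qed

lemma Rp_Qp: "n \<ge> 2 \<Longrightarrow> Rp n = Qp n"
proof (induction n rule: dec_induct)
  case base then show ?case by (rule Rp_2)
next
  case (step n)
  then show ?case using Rp_Suc[OF step.hyps(1)] Qp_Suc[OF step.hyps(1)] by simp
qed

lemma poly_Qp: "poly (Qp n) x = 2 * (\<Sum>i=0..n - 2. real (d n i) * x ^ (i + 1) * (1 + x) ^ (n - 2 - i))"
  by (simp add: Qp_def poly_sum sum_distrib_left algebra_simps)

theorem mainTheorem5:
  fixes n :: nat and x :: real
  assumes "n \<ge> 2"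
  shows "(x \<noteq> -1 \<longrightarrow> R n x = 2 * (1 + x) ^ (n - 1) * D n (x / (1 + x))) \<and>
         R n x = 2 * (\<Sum>i = 0..(n - 1) div 2. real (d n i) * x ^ (i + 1) * (1 + x) ^ (n - 2 - i))"
proof -
  have n: "n \<ge> 2" by (rule assms)
  have R1: "R n x = 2 * (\<Sum>i=0..n - 2. real (d n i) * x ^ (i + 1) * (1 + x) ^ (n - 2 - i))"
    using poly_Rp[of n x] Rp_Qp[OF n] poly_Qp[of n x] by simp
  have sub: "{0..(n - 1) div 2} \<subseteq> {0..n - 2}" using n by auto
  have R2: "(\<Sum>i=0..n - 2. real (d n i) * x ^ (i + 1) * (1 + x) ^ (n - 2 - i)) =
      (\<Sum>i=0..(n - 1) div 2. real (d n i) * x ^ (i + 1) * (1 + x) ^ (n - 2 - i))"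
  proof (rule sum.mono_neutral_right[OF _ sub])
    show "\<forall>i\<in>{0..n - 2} - {0..(n - 1) div 2}. real (d n i) * x ^ (i + 1) * (1 + x) ^ (n - 2 - i) = 0"
    proof
      fix i assume "i \<in> {0..n - 2} - {0..(n - 1) div 2}"
      then have "n \<le> 2 * i" by auto
      then have "d n i = 0" using n by (intro d_vanish) auto
      then show "real (d n i) * x ^ (i + 1) * (1 + x) ^ (n - 2 - i) = 0" by simp
    qed
  qed simp
  have P2: "R n x = 2 * (\<Sum>i = 0..(n - 1) div 2. real (d n i) * x ^ (i + 1) * (1 + x) ^ (n - 2 - i))"
    using R1 R2 by simp
  have P1: "R n x = 2 * (1 + x) ^ (n - 1) * D n (x / (1 + x))" if x: "x \<noteq> -1"
  proof -
    have nz: "1 + x \<noteq> 0" using x by (metis add.commute add_eq_0_iff)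
    have "(1 + x) ^ (n - 1) * D n (x / (1 + x)) =
        (\<Sum>i = 0..(n - 1) div 2. real (d n i) * ((1 + x) ^ (n - 1) * (x / (1 + x)) ^ (i + 1)))"
      unfolding D_def by (simp add: sum_distrib_left algebra_simps)
    also have "\<dots> = (\<Sum>i = 0..(n - 1) div 2. real (d n i) * x ^ (i + 1) * (1 + x) ^ (n - 2 - i))"
    proof (rule sum.cong[OF refl])
      fix i assume i: "i \<in> {0..(n - 1) div 2}"
      then have e: "n - 1 = (i + 1) + (n - 2 - i)" using n by auto
      have "(1 + x) ^ (n - 1) * (x / (1 + x)) ^ (i + 1) = (1 + x) ^ (i + 1) * (x / (1 + x)) ^ (i + 1) * (1 + x) ^ (n - 2 - i)"
        by (subst e) (simp only: power_add mult_ac)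
      also have "(1 + x) ^ (i + 1) * (x / (1 + x)) ^ (i + 1) = x ^ (i + 1)"
        using nz by (simp add: power_divide)
      finally show "real (d n i) * ((1 + x) ^ (n - 1) * (x / (1 + x)) ^ (i + 1)) = real (d n i) * x ^ (i + 1) * (1 + x) ^ (n - 2 - i)"
        by simp
    qed
    finally show ?thesis using P2 by simp
  qed
  show ?thesis using P1 P2 by blast
qed

end
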